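(* Let $R$ be a monad on Sets, $LM$ a left $R$-module with values in Sets, and let $(C,\widetilde C)$ be subsets of $Ob(CC(R,LM))$ and $\widetilde{Ob}(CC(R,LM))$ satisfying conditions (1.1)–(1.6) below (equivalently, corresponding to a C-subsystem of $CC(R,LM)$). Then the assignment $(Ceq,\widetilde{Ceq})\mapsto(\sim,\simeq)$ described below is a bijection from the set of pairs of subsets $(Ceq,\widetilde{Ceq})$ which together with $(C,\widetilde C)$ satisfy conditions (1.1)–(7b) below, onto the set of pairs $(\sim,\simeq)$ of equivalence relations on $C$ and $\widetilde C$ such that: (i) $(\sim,\simeq)$ satisfies the regular congruence conditions (a)–(f) below; (ii) if $\Gamma\in C$, $F\in C$ and $ft(\Gamma)\sim F$, then $\Gamma\sim\sigma(\Gamma,F)$; (iii) if $\mathcal J\in\widetilde C$, $F\in C$ and $\partial(\mathcal J)\sim F$, then $\mathcal J\simeq\widetilde\sigma(\mathcal J,F)$. The inverse sends $(\sim,\simeq)$ to $Ceq=\{(\Gamma,T,T'):(\Gamma,T),(\Gamma,T')\in C,\ (\Gamma,T)\sim(\Gamma,T')\}$ and $\widetilde{Ceq}=\{(\Gamma,T,o,o'):(\Gamma,T,o),(\Gamma,T,o')\in\widetilde C,\ (\Gamma,T,o)\simeq(\Gamma,T,o')\}$. Conditions (for all well-formed data, $n=l(\Gamma)$, $i=l(\Gamma_1)$): (1.1) $(\rhd)$; (1.2) $(\Gamma,T\rhd)\Rightarrow(\Gamma\rhd)$; (1.3) $(\Gamma\vdash r:R)\Rightarrow(\Gamma,R\rhd)$;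 (1.4) $(\Gamma,T\rhd)\wedge(\Gamma,\Delta\vdash r:R)\Rightarrow(\Gamma,T,t_{n+1}\Delta\vdash t_{n+1}r:t_{n+1}R)$; (1.5) $(\Gamma\vdash s:S)\wedge(\Gamma,S,\Delta\vdash r:R)\Rightarrow(\Gamma,s_{n+1}(\Delta[s/n+1])\vdash s_{n+1}(r[s/n+1]):s_{n+1}(R[s/n+1]))$; (1.6) $(\Gamma,T\rhd)\Rightarrow(\Gamma,T\vdash n+1:t_{n+1}T)$; (2a) $(\Gamma\vdash T=T')\Rightarrow(\Gamma,T\rhd)$; (2b) $(\Gamma,T\rhd)\Rightarrow(\Gamma\vdash T=T)$; (2c) $(\Gamma\vdash T=T')\Rightarrow(\Gamma\vdash T'=T)$; (2d) $(\Gamma\vdash T=T')\wedge(\Gamma\vdash T'=T'')\Rightarrow(\Gamma\vdash T=T'')$; (3a) $(\Gamma\vdash o=o':T)\Rightarrow(\Gamma\vdash o:T)$; (3b) $(\Gamma\vdash o:T)\Rightarrow(\Gamma\vdash o=o:T)$; (3c) $(\Gamma\vdash o=o':T)\Rightarrow(\Gamma\vdash o'=o:T)$; (3d) $(\Gamma\vdash o=o':T)\wedge(\Gamma\vdash o'=o'':T)\Rightarrow(\Gamma\vdash o=o'':T)$; (4a) $(\Gamma_1\vdash T=T')\wedge(\Gamma_1,T,\Gamma_2\vdash S=S')\Rightarrow(\Gamma_1,T',\Gamma_2\vdash S=S')$; (4b) $(\Gamma_1\vdash T=T')\wedge(\Gamma_1,T,\Gamma_2\vdash o=o':S)\Rightarrow(\Gamma_1,T',\Gamma_2\vdash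 o=o':S)$; (4c) $(\Gamma\vdash S=S')\wedge(\Gamma\vdash o=o':S)\Rightarrow(\Gamma\vdash o=o':S')$; (5a) $(\Gamma_1,T\rhd)\wedge(\Gamma_1,\Gamma_2\vdash S=S')\Rightarrow(\Gamma_1,T,t_{i+1}\Gamma_2\vdash t_{i+1}S=t_{i+1}S')$; (5b) $(\Gamma_1,T\rhd)\wedge(\Gamma_1,\Gamma_2\vdash o=o':S)\Rightarrow(\Gamma_1,T,t_{i+1}\Gamma_2\vdash t_{i+1}o=t_{i+1}o':t_{i+1}S)$; (6a) $(\Gamma_1,T,\Gamma_2\vdash S=S')\wedge(\Gamma_1\vdash r:T)\Rightarrow(\Gamma_1,s_{i+1}(\Gamma_2[r/i+1])\vdash s_{i+1}(S[r/i+1])=s_{i+1}(S'[r/i+1]))$; (6b) $(\Gamma_1,T,\Gamma_2\vdash o=o':S)\wedge(\Gamma_1\vdash r:T)\Rightarrow(\Gamma_1,s_{i+1}(\Gamma_2[r/i+1])\vdash s_{i+1}(o[r/i+1])=s_{i+1}(o'[r/i+1]):s_{i+1}(S[r/i+1]))$; (7a) $(\Gamma_1,T,\Gamma_2,S\rhd)\wedge(\Gamma_1\vdash r=r':T)\Rightarrow(\Gamma_1,s_{i+1}(\Gamma_2[r/i+1])\vdash s_{i+1}(S[r/i+1])=s_{i+1}(S[r'/i+1]))$; (7b) $(\Gamma_1,T,\Gamma_2\vdash o:S)\wedge(\Gamma_1\vdash r=r':T)\Rightarrow(\Gamma_1,s_{i+1}(\Gamma_2[r/i+1])\vdash s_{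i+1}(o[r/i+1])=s_{i+1}(o[r'/i+1]):s_{i+1}(S[r/i+1]))$.
   Context: $[n]=\{1,\dots,n\}$. $R$ is a monad on Sets (unit $\eta$, Kleisli extension $\mathrm{bind}$), $LM$ a left $R$-module with action $\rho(f):LM(X)\to LM(Y)$ for $f:X\to R(Y)$. Elements of $Y$ are regarded in $R(Y)$ via $\eta_Y$; $E(f_1/1,\dots,f_m/m)$ is $\rho(f)(E)$ or $\mathrm{bind}(f)(E)$ with $f(i)=f_i$. For $E$ in $LM([m])$ or $R([m])$, $m\ge n$: $t_{n+1}E:=E(1/1,\dots,n/n,n+2/n+1,\dots,m+1/m)$; for $m\ge n+1$, $s\in R([n])$: $s_{n+1}(E[s/n+1]):=E(1/1,\dots,n/n,s/n+1,n+1/n+2,\dots,m-1/m)$; both applied componentwise to sequences. $Ob(CC(R,LM))$: sequences $\Gamma=(T_1,\dots,T_n)$, $T_j\in LM([j-1])$, $l(\Gamma)=n$, $ft$ drops the last entry; commas concatenate. $\widetilde{Ob}(CC(R,LM))$: elements $(\Gamma\vdash t:T)=(T_1,\dots,T_n,T,t)$ with $T\in LM([n])$, $t\in R([n])$; $\partial(\Gamma\vdash t:T)=(\Gamma,T)$. $Ceq\subset\coprod_n(\prod_{j<n}LM([j]))\times LM([n])^2$, $\widetilde{Ceq}\subset\coprod_n(\prod_{j\le n}LM([j]))\times R([n])^2$. Notation: $(\Gamma\rhd)$: $\Gamma\in C$; $(\Gamma\vdash t:T)$ as a judgement: $(\Gamma,T,t)\in\widetilde C$; $(\Gamma\vdash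 S=S')$: $(\Gamma,S,S')\in Ceq$; $(\Gamma\vdash o=o':S)$: $(\Gamma,S,o,o')\in\widetilde{Ceq}$. The assignment $(Ceq,\widetilde{Ceq})\mapsto(\sim,\simeq)$: $(T_1,\dots,T_n)\sim(T'_1,\dots,T'_n)$ (elements of $C$) iff $n=0$ or ($ft$'s are $\sim$-related and $(T_1,\dots,T_{n-1}\vdash T_n=T'_n)$); different lengths never related; $(\Gamma\vdash o:S)\simeq(\Gamma'\vdash o':S')$ iff $(\Gamma,S)\sim(\Gamma',S')$ and $(\Gamma\vdash o=o':S)$. $\sigma((T_1,\dots,T_{n+k}),(T'_1,\dots,T'_n))=(T'_1,\dots,T'_n,T_{n+1},\dots,T_{n+k})$ for $k>0$. For $\mathcal J=(T_1,\dots,T_{n+k-1}\vdash t:T_{n+k})$, $\Gamma'=(T'_1,\dots,T'_n)$, $n\ge1,k\ge0$: $\widetilde\sigma(\mathcal J,\Gamma')=(T'_1,\dots,T'_n,T_{n+1},\dots,T_{n+k-1}\vdash t:T_{n+k})$ if $k>0$, $(T'_1,\dots,T'_{n-1}\vdash t:T'_n)$ if $k=0$. Operations (with $n=l(\Gamma)$): $T((\Gamma,T),(\Gamma,\Delta))=(\Gamma,T,t_{n+1}\Delta)$; $\widetilde T((\Gamma,T),(\Gamma,\Delta\vdash r:R))=(\Gamma,T,t_{n+1}\Delta\vdash t_{n+1}r:t_{n+1}R)$; $S((\Gamma\vdash s:S),(\Gamma,S,\Delta))=(\Gamma,s_{n+1}(\Delta[s/n+1]))$; $\widetilde S((\Gamma\vdash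 s:S),(\Gamma,S,\Delta\vdash r:R))=(\Gamma,s_{n+1}(\Delta[s/n+1])\vdash s_{n+1}(r[s/n+1]):s_{n+1}(R[s/n+1]))$; $\delta(\Gamma,T)=(\Gamma,T\vdash n+1:t_{n+1}T)$. Regular congruence conditions on $(\sim,\simeq)$: (a) both are equivalence relations; (b) $\Gamma\sim\Gamma'\Rightarrow l(\Gamma)=l(\Gamma')$ and $ft(\Gamma)\sim ft(\Gamma')$; (c) $\mathcal J\simeq\mathcal J'\Rightarrow\partial\mathcal J\sim\partial\mathcal J'$; (d) if $(\Gamma,T)\in C$, $\Gamma'\in C$, $\Gamma\sim\Gamma'$, there is $(\Gamma',T')\in C$ with $(\Gamma,T)\sim(\Gamma',T')$; (e) if $\mathcal J\in\widetilde C$, $F\in C$, $\partial\mathcal J\sim F$, there is $\mathcal J'\in\widetilde C$ with $\partial\mathcal J'=F$ and $\mathcal J\simeq\mathcal J'$; (f) compatibility with $T,\widetilde T,S,\widetilde S,\delta$: related arguments in $C/\widetilde C$ for which both applications are defined give related results. *)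

theory Defs
  imports Main
begin

text \<open>
  A monad R on Sets together with a left R-module LM is represented by its
  restriction to the finite sets [n] = {1..n} (the only sets used in CC(R,LM)):
  carriers Rs n = R([n]), LMs n = LM([n]) (as subsets of fixed HOL types),
  unit eta n i = eta_[n](i) for i in [n], Kleisli extension
  bnd m k f : R([m]) -> R([k]) for f : [m] -> R([k]) (f only matters on [m]),
  and module action act m k f : LM([m]) -> LM([k]).
\<close>

record ('r, 'l) mdata =
  Rs  :: "nat \<Rightarrow> 'r set"
  eta :: "nat \<Rightarrow> nat \<Rightarrow> 'r"
  bnd :: "nat \<Rightarrow> nat \<Rightarrow> (nat \<Rightarrow> 'r) \<Rightarrow> 'r \<Rightarrow> 'r"
  LMs :: "nat \<Rightarrow> 'l set"
  act :: "nat \<Rightarrow> nat \<Rightarrow> (nat \<Rightarrow> 'r) \<Rightarrow> 'l \<Rightarrow> 'l"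

definition kl_map :: "('r, 'l) mdata \<Rightarrow> nat \<Rightarrow> nat \<Rightarrow> (nat \<Rightarrow> 'r) \<Rightarrow> bool" where
  "kl_map M m k f \<longleftrightarrow> (\<forall>i\<in>{1..m}. f i \<in> Rs M k)"

definition monad_module :: "('r, 'l) mdata \<Rightarrow> bool" where
  "monad_module M \<longleftrightarrow>
     \<comment> \<open>monad (Kleisli triple)\<close>
     (\<forall>n i. i \<in> {1..n} \<longrightarrow> eta M n i \<in> Rs M n) \<and>
     (\<forall>m k f x. kl_map M m k f \<longrightarrow> x \<in> Rs M m \<longrightarrow> bnd M m k f x \<in> Rs M k) \<and>
     (\<forall>m k f g x. (\<forall>i\<in>{1..m}. f i = g i) \<longrightarrow> x \<in> Rs M m \<longrightarrow> bnd M m k f x = bnd M m k g x) \<and>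
     (\<forall>m k f i. kl_map M m k f \<longrightarrow> i \<in> {1..m} \<longrightarrow> bnd M m k f (eta M m i) = f i) \<and>
     (\<forall>m x. x \<in> Rs M m \<longrightarrow> bnd M m m (eta M m) x = x) \<and>
     (\<forall>m k l f g x. kl_map M m k f \<longrightarrow> kl_map M k l g \<longrightarrow> x \<in> Rs M m \<longrightarrow>
        bnd M k l g (bnd M m k f x) = bnd M m l (\<lambda>i. bnd M k l g (f i)) x) \<and>
     \<comment> \<open>left module\<close>
     (\<forall>m k f E. kl_map M m k f \<longrightarrow> E \<in> LMs M m \<longrightarrow> act M m k f E \<in> LMs M k) \<and>
     (\<forall>m k f g E. (\<forall>i\<in>{1..m}. f i = g i) \<longrightarrow> E \<in> LMs M m \<longrightarrow> act M m k f E = act M m k g E) \<and>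
     (\<forall>m E. E \<in> LMs M m \<longrightarrow> act M m m (eta M m) E = E) \<and>
     (\<forall>m k l f g E. kl_map M m k f \<longrightarrow> kl_map M k l g \<longrightarrow> E \<in> LMs M m \<longrightarrow>
        act M k l g (act M m k f E) = act M m l (\<lambda>i. bnd M k l g (f i)) E)"

definition wk_fun :: "('r, 'l) mdata \<Rightarrow> nat \<Rightarrow> nat \<Rightarrow> nat \<Rightarrow> 'r" where
  "wk_fun M n m = (\<lambda>i. eta M (Suc m) (if i \<le> n then i else Suc i))"

text \<open>t_{n+1} E for E in LM([m]) resp. R([m]), m >= n; result in LM([m+1]) resp. R([m+1]).\<close>
definition wk_l :: "('r, 'l) mdata \<Rightarrow> nat \<Rightarrow> nat \<Rightarrow> 'l \<Rightarrow> 'l" where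
  "wk_l M n m E = act M m (Suc m) (wk_fun M n m) E"

definition wk_r :: "('r, 'l) mdata \<Rightarrow> nat \<Rightarrow> nat \<Rightarrow> 'r \<Rightarrow> 'r" where
  "wk_r M n m x = bnd M m (Suc m) (wk_fun M n m) x"

text \<open>Componentwise on a sequence Delta extending a context of length n
  (so Delta!j lies in LM([n+j])).\<close>
definition wk_seq :: "('r, 'l) mdata \<Rightarrow> nat \<Rightarrow> 'l list \<Rightarrow> 'l list" where
  "wk_seq M n D = map (\<lambda>j. wk_l M n (n + j) (D ! j)) [0..<length D]"

definition sb_fun :: "('r, 'l) mdata \<Rightarrow> nat \<Rightarrow> nat \<Rightarrow> 'r \<Rightarrow> nat \<Rightarrow> 'r" where
  "sb_fun M n m s = (\<lambda>i. if i \<le> n then eta M (m - 1) i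
                        else if i = Suc n then bnd M n (m - 1) (eta M (m - 1)) s
                        else eta M (m - 1) (i - 1))"

text \<open>s_{n+1}(E[s/n+1]) for E in LM([m]) resp. R([m]), m >= n+1, s in R([n]);
  result in LM([m-1]) resp. R([m-1]) (s is regarded in R([m-1]) via [n] \<subseteq> [m-1]).\<close>
definition sb_l :: "('r, 'l) mdata \<Rightarrow> nat \<Rightarrow> nat \<Rightarrow> 'r \<Rightarrow> 'l \<Rightarrow> 'l" where
  "sb_l M n m s E = act M m (m - 1) (sb_fun M n m s) E"

definition sb_r :: "('r, 'l) mdata \<Rightarrow> nat \<Rightarrow> nat \<Rightarrow> 'r \<Rightarrow> 'r \<Rightarrow> 'r" where
  "sb_r M n m s x = bnd M m (m - 1) (sb_fun M n m s) x"

text \<open>Componentwise on Delta extending a context of length n+1 (Delta!j in LM([n+1+j])).\<close>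
definition sb_seq :: "('r, 'l) mdata \<Rightarrow> nat \<Rightarrow> 'r \<Rightarrow> 'l list \<Rightarrow> 'l list" where
  "sb_seq M n s D = map (\<lambda>j. sb_l M n (Suc n + j) s (D ! j)) [0..<length D]"

text \<open>Contexts (T_1,...,T_n) are lists with T_j in LM([j-1]); a judgement
  (Gamma |- t : T) is the triple (Gamma, T, t).\<close>
definition Ob :: "('r, 'l) mdata \<Rightarrow> 'l list set" where
  "Ob M = {G. \<forall>j<length G. G ! j \<in> LMs M j}"

definition ObT :: "('r, 'l) mdata \<Rightarrow> ('l list \<times> 'l \<times> 'r) set" where
  "ObT M = {(G, T, t). G \<in> Ob M \<and> T \<in> LMs M (length G) \<and> t \<in> Rs M (length G)}"

definition bd :: "'l list \<times> 'l \<times> 'r \<Rightarrow> 'l list" where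
  "bd J = (case J of (G, T, t) \<Rightarrow> G @ [T])"

definition EqAmb :: "('r, 'l) mdata \<Rightarrow> ('l list \<times> 'l \<times> 'l) set" where
  "EqAmb M = {(G, S, S'). G \<in> Ob M \<and> S \<in> LMs M (length G) \<and> S' \<in> LMs M (length G)}"

definition EqtAmb :: "('r, 'l) mdata \<Rightarrow> ('l list \<times> 'l \<times> 'r \<times> 'r) set" where
  "EqtAmb M = {(G, S, o1, o2). G @ [S] \<in> Ob M \<and> o1 \<in> Rs M (length G) \<and> o2 \<in> Rs M (length G)}"

definition conds1 :: "('r, 'l) mdata \<Rightarrow> 'l list set \<Rightarrow> ('l list \<times> 'l \<times> 'r) set \<Rightarrow> bool" where
  "conds1 M C Ct \<longleftrightarrow>
     [] \<in> C \<and>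
     (\<forall>G T. G @ [T] \<in> C \<longrightarrow> G \<in> C) \<and>
     (\<forall>G R r. (G, R, r) \<in> Ct \<longrightarrow> G @ [R] \<in> C) \<and>
     (\<forall>G T D R r. G @ [T] \<in> C \<longrightarrow> (G @ D, R, r) \<in> Ct \<longrightarrow>
        (G @ [T] @ wk_seq M (length G) D, wk_l M (length G) (length G + length D) R,
         wk_r M (length G) (length G + length D) r) \<in> Ct) \<and>
     (\<forall>G S s D R r. (G, S, s) \<in> Ct \<longrightarrow> (G @ [S] @ D, R, r) \<in> Ct \<longrightarrow>
        (G @ sb_seq M (length G) s D, sb_l M (length G) (Suc (length G) + length D) s R,
         sb_r M (length G) (Suc (length G) + length D) s r) \<in> Ct) \<and>
     (\<forall>G T. G @ [T] \<in> C \<longrightarrow>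
        (G @ [T], wk_l M (length G) (length G) T, eta M (Suc (length G)) (Suc (length G))) \<in> Ct)"

definition conds_eq :: "('r, 'l) mdata \<Rightarrow> 'l list set \<Rightarrow> ('l list \<times> 'l \<times> 'r) set
    \<Rightarrow> ('l list \<times> 'l \<times> 'l) set \<Rightarrow> ('l list \<times> 'l \<times> 'r \<times> 'r) set \<Rightarrow> bool" where
  "conds_eq M C Ct Ceq Ceqt \<longleftrightarrow>
     \<comment> \<open>(2a)--(2d)\<close>
     (\<forall>G T T'. (G, T, T') \<in> Ceq \<longrightarrow> G @ [T] \<in> C) \<and>
     (\<forall>G T. G @ [T] \<in> C \<longrightarrow> (G, T, T) \<in> Ceq) \<and>
     (\<forall>G T T'. (G, T, T') \<in> Ceq \<longrightarrow> (G, T', T) \<in> Ceq) \<and>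
     (\<forall>G T T' T''. (G, T, T') \<in> Ceq \<longrightarrow> (G, T', T'') \<in> Ceq \<longrightarrow> (G, T, T'') \<in> Ceq) \<and>
     \<comment> \<open>(3a)--(3d)\<close>
     (\<forall>G T o1 o2. (G, T, o1, o2) \<in> Ceqt \<longrightarrow> (G, T, o1) \<in> Ct) \<and>
     (\<forall>G T o1. (G, T, o1) \<in> Ct \<longrightarrow> (G, T, o1, o1) \<in> Ceqt) \<and>
     (\<forall>G T o1 o2. (G, T, o1, o2) \<in> Ceqt \<longrightarrow> (G, T, o2, o1) \<in> Ceqt) \<and>
     (\<forall>G T o1 o2 o3. (G, T, o1, o2) \<in> Ceqt \<longrightarrow> (G, T, o2, o3) \<in> Ceqt \<longrightarrow> (G, T, o1, o3) \<in> Ceqt) \<and>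
     \<comment> \<open>(4a)--(4c)\<close>
     (\<forall>G1 T T' G2 S S'. (G1, T, T') \<in> Ceq \<longrightarrow> (G1 @ [T] @ G2, S, S') \<in> Ceq \<longrightarrow>
        (G1 @ [T'] @ G2, S, S') \<in> Ceq) \<and>
     (\<forall>G1 T T' G2 S o1 o2. (G1, T, T') \<in> Ceq \<longrightarrow> (G1 @ [T] @ G2, S, o1, o2) \<in> Ceqt \<longrightarrow>
        (G1 @ [T'] @ G2, S, o1, o2) \<in> Ceqt) \<and>
     (\<forall>G S S' o1 o2. (G, S, S') \<in> Ceq \<longrightarrow> (G, S, o1, o2) \<in> Ceqt \<longrightarrow> (G, S', o1, o2) \<in> Ceqt) \<and>
     \<comment> \<open>(5a), (5b)\<close>
     (\<forall>G1 T G2 S S'. G1 @ [T] \<in> C \<longrightarrow> (G1 @ G2, S, S') \<in> Ceq \<longrightarrow>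
        (G1 @ [T] @ wk_seq M (length G1) G2,
         wk_l M (length G1) (length G1 + length G2) S,
         wk_l M (length G1) (length G1 + length G2) S') \<in> Ceq) \<and>
     (\<forall>G1 T G2 S o1 o2. G1 @ [T] \<in> C \<longrightarrow> (G1 @ G2, S, o1, o2) \<in> Ceqt \<longrightarrow>
        (G1 @ [T] @ wk_seq M (length G1) G2,
         wk_l M (length G1) (length G1 + length G2) S,
         wk_r M (length G1) (length G1 + length G2) o1,
         wk_r M (length G1) (length G1 + length G2) o2) \<in> Ceqt) \<and>
     \<comment> \<open>(6a), (6b)\<close>
     (\<forall>G1 T G2 S S' r. (G1 @ [T] @ G2, S, S') \<in> Ceq \<longrightarrow> (G1, T, r) \<in> Ct \<longrightarrow>
        (G1 @ sb_seq M (length G1) r G2,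
         sb_l M (length G1) (Suc (length G1) + length G2) r S,
         sb_l M (length G1) (Suc (length G1) + length G2) r S') \<in> Ceq) \<and>
     (\<forall>G1 T G2 S o1 o2 r. (G1 @ [T] @ G2, S, o1, o2) \<in> Ceqt \<longrightarrow> (G1, T, r) \<in> Ct \<longrightarrow>
        (G1 @ sb_seq M (length G1) r G2,
         sb_l M (length G1) (Suc (length G1) + length G2) r S,
         sb_r M (length G1) (Suc (length G1) + length G2) r o1,
         sb_r M (length G1) (Suc (length G1) + length G2) r o2) \<in> Ceqt) \<and>
     \<comment> \<open>(7a), (7b)\<close>
     (\<forall>G1 T G2 S r r'. G1 @ [T] @ G2 @ [S] \<in> C \<longrightarrow> (G1, T, r, r') \<in> Ceqt \<longrightarrow>
        (G1 @ sb_seq M (length G1) r G2,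
         sb_l M (length G1) (Suc (length G1) + length G2) r S,
         sb_l M (length G1) (Suc (length G1) + length G2) r' S) \<in> Ceq) \<and>
     (\<forall>G1 T G2 S o1 r r'. (G1 @ [T] @ G2, S, o1) \<in> Ct \<longrightarrow> (G1, T, r, r') \<in> Ceqt \<longrightarrow>
        (G1 @ sb_seq M (length G1) r G2,
         sb_l M (length G1) (Suc (length G1) + length G2) r S,
         sb_r M (length G1) (Suc (length G1) + length G2) r o1,
         sb_r M (length G1) (Suc (length G1) + length G2) r' o1) \<in> Ceqt)"

function simr :: "('l list \<times> 'l \<times> 'l) set \<Rightarrow> 'l list \<Rightarrow> 'l list \<Rightarrow> bool" where
  "simr Ceq G G' =
     (if G = [] then G' = []
      else length G = length G' \<and> simr Ceq (butlast G) (butlast G') \<and>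
           (butlast G, last G, last G') \<in> Ceq)"
  by auto
termination by (relation "measure (\<lambda>(_, G, _). length G)") auto

definition sim_of :: "'l list set \<Rightarrow> ('l list \<times> 'l \<times> 'l) set \<Rightarrow> ('l list \<times> 'l list) set" where
  "sim_of C Ceq = {(G, G'). G \<in> C \<and> G' \<in> C \<and> simr Ceq G G'}"

definition simeq_of :: "'l list set \<Rightarrow> ('l list \<times> 'l \<times> 'r) set \<Rightarrow> ('l list \<times> 'l \<times> 'l) set
    \<Rightarrow> ('l list \<times> 'l \<times> 'r \<times> 'r) set \<Rightarrow> (('l list \<times> 'l \<times> 'r) \<times> ('l list \<times> 'l \<times> 'r)) set" where
  "simeq_of C Ct Ceq Ceqt =
     {((G, S, o1), (G', S', o2)). (G, S, o1) \<in> Ct \<and> (G', S', o2) \<in> Ct \<and>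
        (G @ [S], G' @ [S']) \<in> sim_of C Ceq \<and> (G, S, o1, o2) \<in> Ceqt}"

definition assign :: "'l list set \<Rightarrow> ('l list \<times> 'l \<times> 'r) set
    \<Rightarrow> ('l list \<times> 'l \<times> 'l) set \<times> ('l list \<times> 'l \<times> 'r \<times> 'r) set
    \<Rightarrow> ('l list \<times> 'l list) set \<times> (('l list \<times> 'l \<times> 'r) \<times> ('l list \<times> 'l \<times> 'r)) set" where
  "assign C Ct p = (sim_of C (fst p), simeq_of C Ct (fst p) (snd p))"

definition unassign :: "'l list set \<Rightarrow> ('l list \<times> 'l \<times> 'r) set
    \<Rightarrow> ('l list \<times> 'l list) set \<times> (('l list \<times> 'l \<times> 'r) \<times> ('l list \<times> 'l \<times> 'r)) set
    \<Rightarrow> ('l list \<times> 'l \<times> 'l) set \<times> ('l list \<times> 'l \<times> 'r \<times> 'r) set" where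
  "unassign C Ct q =
     ({(G, T, T'). G @ [T] \<in> C \<and> G @ [T'] \<in> C \<and> (G @ [T], G @ [T']) \<in> fst q},
      {(G, T, o1, o2). (G, T, o1) \<in> Ct \<and> (G, T, o2) \<in> Ct \<and> ((G, T, o1), (G, T, o2)) \<in> snd q})"

definition sigma :: "'l list \<Rightarrow> 'l list \<Rightarrow> 'l list" where
  "sigma G F = F @ drop (length F) G"

definition tsigma :: "'l list \<times> 'l \<times> 'r \<Rightarrow> 'l list \<Rightarrow> 'l list \<times> 'l \<times> 'r" where
  "tsigma J F = (case J of (G, T, t) \<Rightarrow>
      if length F \<le> length G then (F @ drop (length F) G, T, t)   \<comment> \<open>k > 0\<close>
      else (butlast F, last F, t))                                \<comment> \<open>k = 0\<close>"

definition regular_congruence :: "('r, 'l) mdata \<Rightarrow> 'l list set \<Rightarrow> ('l list \<times> 'l \<times> 'r) set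
    \<Rightarrow> ('l list \<times> 'l list) set \<Rightarrow> (('l list \<times> 'l \<times> 'r) \<times> ('l list \<times> 'l \<times> 'r)) set \<Rightarrow> bool" where
  "regular_congruence M C Ct sim simeq \<longleftrightarrow>
     \<comment> \<open>(a)\<close>
     equiv C sim \<and> equiv Ct simeq \<and>
     \<comment> \<open>(b)\<close>
     (\<forall>G G'. (G, G') \<in> sim \<longrightarrow> length G = length G' \<and> (butlast G, butlast G') \<in> sim) \<and>
     \<comment> \<open>(c)\<close>
     (\<forall>J J'. (J, J') \<in> simeq \<longrightarrow> (bd J, bd J') \<in> sim) \<and>
     \<comment> \<open>(d)\<close>
     (\<forall>G T G'. G @ [T] \<in> C \<longrightarrow> G' \<in> C \<longrightarrow> (G, G') \<in> sim \<longrightarrow>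
        (\<exists>T'. G' @ [T'] \<in> C \<and> (G @ [T], G' @ [T']) \<in> sim)) \<and>
     \<comment> \<open>(e)\<close>
     (\<forall>J F. J \<in> Ct \<longrightarrow> F \<in> C \<longrightarrow> (bd J, F) \<in> sim \<longrightarrow>
        (\<exists>J'. J' \<in> Ct \<and> bd J' = F \<and> (J, J') \<in> simeq)) \<and>
     \<comment> \<open>(f) compatibility with T\<close>
     (\<forall>G T D G' T' D'. G @ [T] \<in> C \<longrightarrow> G @ D \<in> C \<longrightarrow> G' @ [T'] \<in> C \<longrightarrow> G' @ D' \<in> C \<longrightarrow>
        (G @ [T], G' @ [T']) \<in> sim \<longrightarrow> (G @ D, G' @ D') \<in> sim \<longrightarrow>
        (G @ [T] @ wk_seq M (length G) D, G' @ [T'] @ wk_seq M (length G') D') \<in> sim) \<and>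
     \<comment> \<open>(f) compatibility with ~T\<close>
     (\<forall>G T D R r G' T' D' R' r'. G @ [T] \<in> C \<longrightarrow> (G @ D, R, r) \<in> Ct \<longrightarrow>
        G' @ [T'] \<in> C \<longrightarrow> (G' @ D', R', r') \<in> Ct \<longrightarrow>
        (G @ [T], G' @ [T']) \<in> sim \<longrightarrow> ((G @ D, R, r), (G' @ D', R', r')) \<in> simeq \<longrightarrow>
        ((G @ [T] @ wk_seq M (length G) D, wk_l M (length G) (length G + length D) R,
          wk_r M (length G) (length G + length D) r),
         (G' @ [T'] @ wk_seq M (length G') D', wk_l M (length G') (length G' + length D') R',
          wk_r M (length G') (length G' + length D') r')) \<in> simeq) \<and>
     \<comment> \<open>(f) compatibility with S\<close>
     (\<forall>G S s D G' S' s' D'. (G, S, s) \<in> Ct \<longrightarrow> G @ [S] @ D \<in> C \<longrightarrow>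
        (G', S', s') \<in> Ct \<longrightarrow> G' @ [S'] @ D' \<in> C \<longrightarrow>
        ((G, S, s), (G', S', s')) \<in> simeq \<longrightarrow> (G @ [S] @ D, G' @ [S'] @ D') \<in> sim \<longrightarrow>
        (G @ sb_seq M (length G) s D, G' @ sb_seq M (length G') s' D') \<in> sim) \<and>
     \<comment> \<open>(f) compatibility with ~S\<close>
     (\<forall>G S s D R r G' S' s' D' R' r'. (G, S, s) \<in> Ct \<longrightarrow> (G @ [S] @ D, R, r) \<in> Ct \<longrightarrow>
        (G', S', s') \<in> Ct \<longrightarrow> (G' @ [S'] @ D', R', r') \<in> Ct \<longrightarrow>
        ((G, S, s), (G', S', s')) \<in> simeq \<longrightarrow> ((G @ [S] @ D, R, r), (G' @ [S'] @ D', R', r')) \<in> simeq \<longrightarrow>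
        ((G @ sb_seq M (length G) s D, sb_l M (length G) (Suc (length G) + length D) s R,
          sb_r M (length G) (Suc (length G) + length D) s r),
         (G' @ sb_seq M (length G') s' D', sb_l M (length G') (Suc (length G') + length D') s' R',
          sb_r M (length G') (Suc (length G') + length D') s' r')) \<in> simeq) \<and>
     \<comment> \<open>(f) compatibility with delta\<close>
     (\<forall>G T G' T'. G @ [T] \<in> C \<longrightarrow> G' @ [T'] \<in> C \<longrightarrow> (G @ [T], G' @ [T']) \<in> sim \<longrightarrow>
        ((G @ [T], wk_l M (length G) (length G) T, eta M (Suc (length G)) (Suc (length G))),
         (G' @ [T'], wk_l M (length G') (length G') T', eta M (Suc (length G')) (Suc (length G')))) \<in> simeq)"

definition sigma_conds :: "'l list set \<Rightarrow> ('l list \<times> 'l \<times> 'r) set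
    \<Rightarrow> ('l list \<times> 'l list) set \<Rightarrow> (('l list \<times> 'l \<times> 'r) \<times> ('l list \<times> 'l \<times> 'r)) set \<Rightarrow> bool" where
  "sigma_conds C Ct sim simeq \<longleftrightarrow>
     \<comment> \<open>(ii)\<close>
     (\<forall>G F. G \<in> C \<longrightarrow> G \<noteq> [] \<longrightarrow> F \<in> C \<longrightarrow> (butlast G, F) \<in> sim \<longrightarrow> (G, sigma G F) \<in> sim) \<and>
     \<comment> \<open>(iii)\<close>
     (\<forall>J F. J \<in> Ct \<longrightarrow> F \<in> C \<longrightarrow> (bd J, F) \<in> sim \<longrightarrow> (J, tsigma J F) \<in> simeq)"

end

theory Submission
  imports Defs
begin



declare simr.simps[simp del]

lemma simr_length: "simr Ceq G G' \<Longrightarrow> length G = length G'"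
  by (subst (asm) simr.simps) (auto split: if_splits)

lemma simr_Nil[simp]: "simr Ceq [] G' \<longleftrightarrow> G' = []"
  by (subst simr.simps) simp

lemma simr_snoc_Nil[simp]: "simr Ceq (A @ [a]) [] = False"
  by (subst simr.simps) simp

lemma simr_snoc: "simr Ceq (A @ [a]) (B @ [b]) \<longleftrightarrow> simr Ceq A B \<and> (A, a, b) \<in> Ceq"
  by (subst simr.simps) (auto dest: simr_length)

lemma wk_seq_snoc: "wk_seq M n (D @ [X]) = wk_seq M n D @ [wk_l M n (n + length D) X]"
  by (simp add: wk_seq_def nth_append)

lemma wk_seq_Nil[simp]: "wk_seq M n [] = []"
  by (simp add: wk_seq_def)

lemma wk_seq_length[simp]: "length (wk_seq M n D) = length D"
  by (simp add: wk_seq_def)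

lemma sb_seq_snoc: "sb_seq M n s (D @ [X]) = sb_seq M n s D @ [sb_l M n (Suc n + length D) s X]"
  by (simp add: sb_seq_def nth_append)

lemma sb_seq_Nil[simp]: "sb_seq M n s [] = []"
  by (simp add: sb_seq_def)

lemma sb_seq_length[simp]: "length (sb_seq M n s D) = length D"
  by (simp add: sb_seq_def)

context
  fixes M :: "('r, 'l) mdata" and C Ct
  assumes c1: "conds1 M C Ct"
begin
lemma c1_1: "[] \<in> C" using c1 unfolding conds1_def by blast
lemma c1_2: "G @ [T] \<in> C \<Longrightarrow> G \<in> C" using c1 unfolding conds1_def by blast
lemma c1_3: "(G, R, r) \<in> Ct \<Longrightarrow> G @ [R] \<in> C" using c1 unfolding conds1_def by blast
lemma c1_4: "G @ [T] \<in> C \<Longrightarrow> (G @ D, R, r) \<in> Ct \<Longrightarrow>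
        (G @ [T] @ wk_seq M (length G) D, wk_l M (length G) (length G + length D) R,
         wk_r M (length G) (length G + length D) r) \<in> Ct"
  using c1 unfolding conds1_def by blast
lemma c1_5: "(G, S, s) \<in> Ct \<Longrightarrow> (G @ [S] @ D, R, r) \<in> Ct \<Longrightarrow>
        (G @ sb_seq M (length G) s D, sb_l M (length G) (Suc (length G) + length D) s R,
         sb_r M (length G) (Suc (length G) + length D) s r) \<in> Ct"
  using c1 unfolding conds1_def by blast
lemma c1_6: "G @ [T] \<in> C \<Longrightarrow>
        (G @ [T], wk_l M (length G) (length G) T, eta M (Suc (length G)) (Suc (length G))) \<in> Ct"
  using c1 unfolding conds1_def by blast

lemma C_wk: assumes "G @ [T] \<in> C" "G @ D \<in> C"
  shows "G @ [T] @ wk_seq M (length G) D \<in> C"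
proof (cases D rule: rev_cases)
  case Nil then show ?thesis using assms by simp
next
  case (snoc D0 x)
  have "((G @ D0) @ [x], wk_l M (length (G @ D0)) (length (G @ D0)) x,
      eta M (Suc (length (G @ D0))) (Suc (length (G @ D0)))) \<in> Ct"
    using c1_6[of "G @ D0" x] c1_6[of "G @ [S] @ D0" x] assms(2) snoc by simp
  hence h: "(G @ D, wk_l M (length (G @ D0)) (length (G @ D0)) x,
      eta M (Suc (length (G @ D0))) (Suc (length (G @ D0)))) \<in> Ct" using snoc by simp
  show ?thesis using c1_3[OF c1_4[OF assms(1) h]] c1_2 by (metis append_assoc)
qed

lemma C_sb: assumes "(G, S, s) \<in> Ct" "G @ [S] @ D \<in> C"
  shows "G @ sb_seq M (length G) s D \<in> C"
proof (cases D rule: rev_cases)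
  case Nil then show ?thesis using assms c1_3 c1_2 by fastforce
next
  case (snoc D0 x)
  have "((G @ [S] @ D0) @ [x], wk_l M (length (G @ [S] @ D0)) (length (G @ [S] @ D0)) x,
      eta M (Suc (length (G @ [S] @ D0))) (Suc (length (G @ [S] @ D0)))) \<in> Ct"
    using c1_6[of "G @ D0" x] c1_6[of "G @ [S] @ D0" x] assms(2) snoc by simp
  hence h: "(G @ [S] @ D, wk_l M (length (G @ [S] @ D0)) (length (G @ [S] @ D0)) x,
      eta M (Suc (length (G @ [S] @ D0))) (Suc (length (G @ [S] @ D0)))) \<in> Ct" using snoc by simp
  show ?thesis using c1_3[OF c1_5[OF assms(1) h]] c1_2 by (metis append_assoc)
qed
end




context
  fixes M :: "('r, 'l) mdata" and C Ct Ceq Ceqt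
  assumes c1: "conds1 M C Ct" and ce: "conds_eq M C Ct Ceq Ceqt"
begin

lemma e2a: "(G, T, T') \<in> Ceq \<Longrightarrow> G @ [T] \<in> C" using ce[unfolded conds_eq_def, THEN conjunct1] by blast
lemma e2b: "G @ [T] \<in> C \<Longrightarrow> (G, T, T) \<in> Ceq" using ce[unfolded conds_eq_def, THEN conjunct2, THEN conjunct1] by blast
lemma e2c: "(G, T, T') \<in> Ceq \<Longrightarrow> (G, T', T) \<in> Ceq" using ce[unfolded conds_eq_def, THEN conjunct2, THEN conjunct2, THEN conjunct1] by blast
lemma e2d: "(G, T, T') \<in> Ceq \<Longrightarrow> (G, T', T'') \<in> Ceq \<Longrightarrow> (G, T, T'') \<in> Ceq"
  using ce[unfolded conds_eq_def, THEN conjunct2, THEN conjunct2, THEN conjunct2, THEN conjunct1] by blast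
lemma e3a: "(G, T, o1, o2) \<in> Ceqt \<Longrightarrow> (G, T, o1) \<in> Ct" using ce[unfolded conds_eq_def, THEN conjunct2, THEN conjunct2, THEN conjunct2, THEN conjunct2, THEN conjunct1] by blast
lemma e3b: "(G, T, o1) \<in> Ct \<Longrightarrow> (G, T, o1, o1) \<in> Ceqt" using ce[unfolded conds_eq_def, THEN conjunct2, THEN conjunct2, THEN conjunct2, THEN conjunct2, THEN conjunct2, THEN conjunct1] by blast
lemma e3c: "(G, T, o1, o2) \<in> Ceqt \<Longrightarrow> (G, T, o2, o1) \<in> Ceqt" using ce[unfolded conds_eq_def, THEN conjunct2, THEN conjunct2, THEN conjunct2, THEN conjunct2, THEN conjunct2, THEN conjunct2, THEN conjunct1] by blast
lemma e3d: "(G, T, o1, o2) \<in> Ceqt \<Longrightarrow> (G, T, o2, o3) \<in> Ceqt \<Longrightarrow> (G, T, o1, o3) \<in> Ceqt"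
  using ce[unfolded conds_eq_def, THEN conjunct2, THEN conjunct2, THEN conjunct2, THEN conjunct2, THEN conjunct2, THEN conjunct2, THEN conjunct2, THEN conjunct1] by blast
lemma e4a: "(G1, T, T') \<in> Ceq \<Longrightarrow> (G1 @ [T] @ G2, S, S') \<in> Ceq \<Longrightarrow> (G1 @ [T'] @ G2, S, S') \<in> Ceq"
  using ce[unfolded conds_eq_def, THEN conjunct2, THEN conjunct2, THEN conjunct2, THEN conjunct2, THEN conjunct2, THEN conjunct2, THEN conjunct2, THEN conjunct2, THEN conjunct1] by blast
lemma e4b: "(G1, T, T') \<in> Ceq \<Longrightarrow> (G1 @ [T] @ G2, S, o1, o2) \<in> Ceqt \<Longrightarrow>
        (G1 @ [T'] @ G2, S, o1, o2) \<in> Ceqt"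
  using ce[unfolded conds_eq_def, THEN conjunct2, THEN conjunct2, THEN conjunct2, THEN conjunct2, THEN conjunct2, THEN conjunct2, THEN conjunct2, THEN conjunct2, THEN conjunct2, THEN conjunct1] by blast
lemma e4c: "(G, S, S') \<in> Ceq \<Longrightarrow> (G, S, o1, o2) \<in> Ceqt \<Longrightarrow> (G, S', o1, o2) \<in> Ceqt"
  using ce[unfolded conds_eq_def, THEN conjunct2, THEN conjunct2, THEN conjunct2, THEN conjunct2, THEN conjunct2, THEN conjunct2, THEN conjunct2, THEN conjunct2, THEN conjunct2, THEN conjunct2, THEN conjunct1] by blast
lemma e5a: "G1 @ [T] \<in> C \<Longrightarrow> (G1 @ G2, S, S') \<in> Ceq \<Longrightarrow>
        (G1 @ [T] @ wk_seq M (length G1) G2,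
         wk_l M (length G1) (length G1 + length G2) S,
         wk_l M (length G1) (length G1 + length G2) S') \<in> Ceq"
  using ce[unfolded conds_eq_def, THEN conjunct2, THEN conjunct2, THEN conjunct2, THEN conjunct2, THEN conjunct2, THEN conjunct2, THEN conjunct2, THEN conjunct2, THEN conjunct2, THEN conjunct2, THEN conjunct2, THEN conjunct1] by blast
lemma e5b: "G1 @ [T] \<in> C \<Longrightarrow> (G1 @ G2, S, o1, o2) \<in> Ceqt \<Longrightarrow>
        (G1 @ [T] @ wk_seq M (length G1) G2,
         wk_l M (length G1) (length G1 + length G2) S,
         wk_r M (length G1) (length G1 + length G2) o1,
         wk_r M (length G1) (length G1 + length G2) o2) \<in> Ceqt"
  using ce[unfolded conds_eq_def, THEN conjunct2, THEN conjunct2, THEN conjunct2, THEN conjunct2, THEN conjunct2, THEN conjunct2, THEN conjunct2, THEN conjunct2, THEN conjunct2, THEN conjunct2, THEN conjunct2, THEN conjunct2, THEN conjunct1] by blast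
lemma e6a: "(G1 @ [T] @ G2, S, S') \<in> Ceq \<Longrightarrow> (G1, T, r) \<in> Ct \<Longrightarrow>
        (G1 @ sb_seq M (length G1) r G2,
         sb_l M (length G1) (Suc (length G1) + length G2) r S,
         sb_l M (length G1) (Suc (length G1) + length G2) r S') \<in> Ceq"
  using ce[unfolded conds_eq_def, THEN conjunct2, THEN conjunct2, THEN conjunct2, THEN conjunct2, THEN conjunct2, THEN conjunct2, THEN conjunct2, THEN conjunct2, THEN conjunct2, THEN conjunct2, THEN conjunct2, THEN conjunct2, THEN conjunct2, THEN conjunct1] by blast
lemma e6b: "(G1 @ [T] @ G2, S, o1, o2) \<in> Ceqt \<Longrightarrow> (G1, T, r) \<in> Ct \<Longrightarrow>
        (G1 @ sb_seq M (length G1) r G2,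
         sb_l M (length G1) (Suc (length G1) + length G2) r S,
         sb_r M (length G1) (Suc (length G1) + length G2) r o1,
         sb_r M (length G1) (Suc (length G1) + length G2) r o2) \<in> Ceqt"
  using ce[unfolded conds_eq_def, THEN conjunct2, THEN conjunct2, THEN conjunct2, THEN conjunct2, THEN conjunct2, THEN conjunct2, THEN conjunct2, THEN conjunct2, THEN conjunct2, THEN conjunct2, THEN conjunct2, THEN conjunct2, THEN conjunct2, THEN conjunct2, THEN conjunct1] by blast
lemma e7a: "G1 @ [T] @ G2 @ [S] \<in> C \<Longrightarrow> (G1, T, r, r') \<in> Ceqt \<Longrightarrow>
        (G1 @ sb_seq M (length G1) r G2,
         sb_l M (length G1) (Suc (length G1) + length G2) r S,
         sb_l M (length G1) (Suc (length G1) + length G2) r' S) \<in> Ceq"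
  using ce[unfolded conds_eq_def, THEN conjunct2, THEN conjunct2, THEN conjunct2, THEN conjunct2, THEN conjunct2, THEN conjunct2, THEN conjunct2, THEN conjunct2, THEN conjunct2, THEN conjunct2, THEN conjunct2, THEN conjunct2, THEN conjunct2, THEN conjunct2, THEN conjunct2, THEN conjunct1] by blast
lemma e7b: "(G1 @ [T] @ G2, S, o1) \<in> Ct \<Longrightarrow> (G1, T, r, r') \<in> Ceqt \<Longrightarrow>
        (G1 @ sb_seq M (length G1) r G2,
         sb_l M (length G1) (Suc (length G1) + length G2) r S,
         sb_r M (length G1) (Suc (length G1) + length G2) r o1,
         sb_r M (length G1) (Suc (length G1) + length G2) r' o1) \<in> Ceqt"
  using ce[unfolded conds_eq_def, THEN conjunct2, THEN conjunct2, THEN conjunct2, THEN conjunct2, THEN conjunct2, THEN conjunct2, THEN conjunct2, THEN conjunct2, THEN conjunct2, THEN conjunct2, THEN conjunct2, THEN conjunct2, THEN conjunct2, THEN conjunct2, THEN conjunct2, THEN conjunct2] by blast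

lemma simr_refl: "G \<in> C \<Longrightarrow> simr Ceq G G"
proof (induction G rule: rev_induct)
  case Nil then show ?case by simp
next
  case (snoc x G)
  then show ?case using c1_2[OF c1] e2b by (simp add: simr_snoc)
qed

lemma transport: "simr Ceq G G' \<Longrightarrow>
   ((G' @ D, S, S') \<in> Ceq \<longrightarrow> (G @ D, S, S') \<in> Ceq) \<and>
   ((G' @ D, S, o1, o2) \<in> Ceqt \<longrightarrow> (G @ D, S, o1, o2) \<in> Ceqt)"
proof (induction G arbitrary: G' D rule: rev_induct)
  case Nil then show ?case by simp
next
  case (snoc x G)
  then obtain B b where B: "G' = B @ [b]"
    by (metis simr_snoc_Nil rev_exhaust)
  with snoc have s: "simr Ceq G B" and e: "(G, x, b) \<in> Ceq" by (auto simp: simr_snoc)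
  have e': "(G, b, x) \<in> Ceq" using e2c[OF e] .
  show ?case
  proof (intro conjI impI)
    assume "(G' @ D, S, S') \<in> Ceq"
    hence "(B @ [b] @ D, S, S') \<in> Ceq" using B by simp
    hence "(G @ [b] @ D, S, S') \<in> Ceq" using snoc.IH[OF s] by blast
    thus "((G @ [x]) @ D, S, S') \<in> Ceq" using e4a[OF e'] by simp
  next
    assume "(G' @ D, S, o1, o2) \<in> Ceqt"
    hence "(B @ [b] @ D, S, o1, o2) \<in> Ceqt" using B by simp
    hence "(G @ [b] @ D, S, o1, o2) \<in> Ceqt" using snoc.IH[OF s] by blast
    thus "((G @ [x]) @ D, S, o1, o2) \<in> Ceqt" using e4b[OF e'] by simp
  qed
qed

lemma transport1: "simr Ceq G G' \<Longrightarrow> (G', S, S') \<in> Ceq \<Longrightarrow> (G, S, S') \<in> Ceq"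
  using transport[of G G' "[]"] by simp
lemma transport2: "simr Ceq G G' \<Longrightarrow> (G', S, o1, o2) \<in> Ceqt \<Longrightarrow> (G, S, o1, o2) \<in> Ceqt"
  using transport[of G G' "[]"] by simp

lemma simr_sym: "simr Ceq G G' \<Longrightarrow> simr Ceq G' G"
proof (induction G arbitrary: G' rule: rev_induct)
  case Nil then show ?case by simp
next
  case (snoc x G)
  then obtain B b where "G' = B @ [b]"
    by (metis simr_snoc_Nil rev_exhaust)
  with snoc have s: "simr Ceq B G" "(G, b, x) \<in> Ceq" using e2c by (auto simp: simr_snoc)
  then show ?case using transport1[OF s] \<open>G' = B @ [b]\<close> by (simp add: simr_snoc)
qed

lemma simr_trans: "simr Ceq G G' \<Longrightarrow> simr Ceq G' G'' \<Longrightarrow> simr Ceq G G''"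
proof (induction G arbitrary: G' G'' rule: rev_induct)
  case Nil then show ?case by simp
next
  case (snoc x G)
  then obtain B b where B: "G' = B @ [b]"
    by (metis simr_snoc_Nil rev_exhaust)
  with snoc obtain B' b' where B': "G'' = B' @ [b']"
    by (metis simr_snoc_Nil rev_exhaust)
  from snoc.prems B B' have s1: "simr Ceq G B" "(G, x, b) \<in> Ceq"
    and s2: "simr Ceq B B'" "(B, b, b') \<in> Ceq" by (auto simp: simr_snoc)
  have "(G, b, b') \<in> Ceq" using transport1[OF s1(1) s2(2)] .
  with s1 have "(G, x, b') \<in> Ceq" using e2d by blast
  with snoc.IH[OF s1(1) s2(1)] show ?case using B' by (simp add: simr_snoc)
qed

end



context
  fixes M :: "('r, 'l) mdata" and C Ct Ceq Ceqt
  assumes c1: "conds1 M C Ct" and ce: "conds_eq M C Ct Ceq Ceqt"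
begin

lemma A_T:
  assumes GT: "G @ [T] \<in> C" and h: "simr Ceq (G @ [T]) (G' @ [T'])"
  shows "simr Ceq (G @ D) (G' @ D') \<Longrightarrow>
    simr Ceq (G @ [T] @ wk_seq M (length G) D) (G' @ [T'] @ wk_seq M (length G') D')"
proof (induction D arbitrary: D' rule: rev_induct)
  case Nil
  have "length G = length G'" using simr_length[OF h] by simp
  then have "D' = []" using simr_length[OF Nil] by simp
  then show ?case using h by simp
next
  case (snoc x D)
  have lG: "length G = length G'" using simr_length[OF h] by simp
  from simr_length[OF snoc.prems] lG have "D' \<noteq> []" by auto
  then obtain B b where B: "D' = B @ [b]" by (metis rev_exhaust)
  from snoc.prems B have s: "simr Ceq (G @ D) (G' @ B)" and e: "(G @ D, x, b) \<in> Ceq"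
    using simr_snoc[of Ceq "G @ D" x "G' @ B" b] by auto
  have lD: "length D = length B" using simr_length[OF s] lG by simp
  have IH: "simr Ceq (G @ [T] @ wk_seq M (length G) D) (G' @ [T'] @ wk_seq M (length G') B)"
    using snoc.IH[OF s] .
  have e': "(G @ [T] @ wk_seq M (length G) D, wk_l M (length G) (length G + length D) x,
      wk_l M (length G) (length G + length D) b) \<in> Ceq" using e5a[OF c1 ce GT e] .
  have "simr Ceq ((G @ [T] @ wk_seq M (length G) D) @ [wk_l M (length G) (length G + length D) x])
     ((G' @ [T'] @ wk_seq M (length G') B) @ [wk_l M (length G') (length G' + length B) b])"
    unfolding simr_snoc using IH e' lG lD by simp
  then show ?case unfolding B wk_seq_snoc append_assoc .
qed

lemma A_S:
  assumes Gs: "(G, S, s) \<in> Ct" and es: "(G, S, s, s') \<in> Ceqt"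
    and h: "simr Ceq (G @ [S]) (G' @ [S'])"
  shows "simr Ceq (G @ [S] @ D) (G' @ [S'] @ D') \<Longrightarrow>
    simr Ceq (G @ sb_seq M (length G) s D) (G' @ sb_seq M (length G') s' D')"
proof (induction D arbitrary: D' rule: rev_induct)
  case Nil
  have "length G = length G'" using simr_length[OF h] by simp
  then have "D' = []" using simr_length[OF Nil] by simp
  then show ?case using h by (simp add: simr_snoc)
next
  case (snoc x D)
  have lG: "length G = length G'" using simr_length[OF h] by simp
  from simr_length[OF snoc.prems] lG have "D' \<noteq> []" by auto
  then obtain B b where B: "D' = B @ [b]" by (metis rev_exhaust)
  from snoc.prems B have s: "simr Ceq (G @ [S] @ D) (G' @ [S'] @ B)" and e: "(G @ [S] @ D, x, b) \<in> Ceq"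
    using simr_snoc[of Ceq "G @ [S] @ D" x "G' @ [S'] @ B" b] by auto
  have lD: "length D = length B" using simr_length[OF s] lG by simp
  have IH: "simr Ceq (G @ sb_seq M (length G) s D) (G' @ sb_seq M (length G') s' B)"
    using snoc.IH[OF s] .
  have e1: "(G @ sb_seq M (length G) s D, sb_l M (length G) (Suc (length G) + length D) s x,
      sb_l M (length G) (Suc (length G) + length D) s b) \<in> Ceq" using e6a[OF c1 ce e Gs] .
  have "G @ [S] @ D @ [b] \<in> C" using e2a[OF c1 ce e2c[OF c1 ce e]] by simp
  from e7a[OF c1 ce this es]
  have e2: "(G @ sb_seq M (length G) s D, sb_l M (length G) (Suc (length G) + length D) s b,
      sb_l M (length G) (Suc (length G) + length D) s' b) \<in> Ceq" .
  have "simr Ceq ((G @ sb_seq M (length G) s D) @ [sb_l M (length G) (Suc (length G) + length D) s x])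
     ((G' @ sb_seq M (length G') s' B) @ [sb_l M (length G') (Suc (length G') + length B) s' b])"
    unfolding simr_snoc using IH e2d[OF c1 ce e1 e2] lG lD by simp
  then show ?case unfolding B sb_seq_snoc append_assoc .
qed

end



lemma sim_iff: "(G, G') \<in> sim_of C Ceq \<longleftrightarrow> G \<in> C \<and> G' \<in> C \<and> simr Ceq G G'"
  by (simp add: sim_of_def)

lemma simeq_iff: "((G, S, o1), (G', S', o2)) \<in> simeq_of C Ct Ceq Ceqt \<longleftrightarrow>
   (G, S, o1) \<in> Ct \<and> (G', S', o2) \<in> Ct \<and> (G @ [S], G' @ [S']) \<in> sim_of C Ceq \<and> (G, S, o1, o2) \<in> Ceqt"
  by (simp add: simeq_of_def)

context
  fixes M :: "('r, 'l) mdata" and C Ct Ceq Ceqt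
  assumes c1: "conds1 M C Ct" and ce: "conds_eq M C Ct Ceq Ceqt"
begin

lemma A_equiv1: "equiv C (sim_of C Ceq)"
proof (rule equivI)
  show "sim_of C Ceq \<subseteq> C \<times> C" by (auto simp: sim_of_def)
  show "refl_on C (sim_of C Ceq)" by (auto simp: refl_on_def sim_iff intro: simr_refl[OF c1 ce])
  show "sym (sim_of C Ceq)" by (auto simp: sym_def sim_iff intro: simr_sym[OF c1 ce])
  show "trans (sim_of C Ceq)" by (auto simp: trans_def sim_iff intro: simr_trans[OF c1 ce])
qed

lemma A_equiv2: "equiv Ct (simeq_of C Ct Ceq Ceqt)"
proof (rule equivI)
  show "simeq_of C Ct Ceq Ceqt \<subseteq> Ct \<times> Ct" by (auto simp: simeq_of_def)
  show "refl_on Ct (simeq_of C Ct Ceq Ceqt)"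
    unfolding refl_on_def
  proof
    fix J assume J: "J \<in> Ct"
    obtain G S o1 where [simp]: "J = (G, S, o1)" by (cases J) auto
    from J have "G @ [S] \<in> C" using c1_3[OF c1] by simp
    then show "(J, J) \<in> simeq_of C Ct Ceq Ceqt"
      using J e3b[OF c1 ce] simr_refl[OF c1 ce] by (simp add: simeq_iff sim_iff)
  qed
  show "sym (simeq_of C Ct Ceq Ceqt)"
    unfolding sym_def
  proof (intro allI impI)
    fix J J' assume h: "(J, J') \<in> simeq_of C Ct Ceq Ceqt"
    obtain G S o1 where [simp]: "J = (G, S, o1)" by (cases J) auto
    obtain G' S' o2 where [simp]: "J' = (G', S', o2)" by (cases J') auto
    from h have m: "(G, S, o1) \<in> Ct" "(G', S', o2) \<in> Ct" "G @ [S] \<in> C" "G' @ [S'] \<in> C"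
      and s: "simr Ceq G G'" "(G, S, S') \<in> Ceq" and q: "(G, S, o1, o2) \<in> Ceqt"
      by (auto simp: simeq_iff sim_iff simr_snoc)
    have "(G, S', o2, o1) \<in> Ceqt" using e4c[OF c1 ce s(2) e3c[OF c1 ce q]] .
    hence "(G', S', o2, o1) \<in> Ceqt" using transport2[OF c1 ce simr_sym[OF c1 ce s(1)]] by blast
    moreover have "simr Ceq (G' @ [S']) (G @ [S])"
      using simr_sym[OF c1 ce s(1)] transport1[OF c1 ce simr_sym[OF c1 ce s(1)] e2c[OF c1 ce s(2)]]
      by (simp add: simr_snoc)
    ultimately show "(J', J) \<in> simeq_of C Ct Ceq Ceqt" using m by (simp add: simeq_iff sim_iff)
  qed
  show "trans (simeq_of C Ct Ceq Ceqt)"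
    unfolding trans_def
  proof (intro allI impI)
    fix J J' J'' assume h: "(J, J') \<in> simeq_of C Ct Ceq Ceqt" "(J', J'') \<in> simeq_of C Ct Ceq Ceqt"
    obtain G S o1 where [simp]: "J = (G, S, o1)" by (cases J) auto
    obtain G' S' o2 where [simp]: "J' = (G', S', o2)" by (cases J') auto
    obtain G'' S'' o3 where [simp]: "J'' = (G'', S'', o3)" by (cases J'') auto
    from h have m: "(G, S, o1) \<in> Ct" "(G'', S'', o3) \<in> Ct" "G @ [S] \<in> C" "G'' @ [S''] \<in> C"
      and s: "simr Ceq (G @ [S]) (G' @ [S'])" "simr Ceq (G' @ [S']) (G'' @ [S''])"
      and q: "(G, S, o1, o2) \<in> Ceqt" "(G', S', o2, o3) \<in> Ceqt"
      by (auto simp: simeq_iff sim_iff)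
    from s(1) have s1: "simr Ceq G G'" "(G, S, S') \<in> Ceq" by (auto simp: simr_snoc)
    have "(G, S', o2, o3) \<in> Ceqt" using transport2[OF c1 ce s1(1) q(2)] .
    hence "(G, S, o2, o3) \<in> Ceqt" using e4c[OF c1 ce e2c[OF c1 ce s1(2)]] by blast
    hence "(G, S, o1, o3) \<in> Ceqt" using e3d[OF c1 ce q(1)] by blast
    moreover have "simr Ceq (G @ [S]) (G'' @ [S''])" using simr_trans[OF c1 ce s] .
    ultimately show "(J, J'') \<in> simeq_of C Ct Ceq Ceqt" using m by (simp add: simeq_iff sim_iff)
  qed
qed

lemma A_b: "(G, G') \<in> sim_of C Ceq \<Longrightarrow> length G = length G' \<and> (butlast G, butlast G') \<in> sim_of C Ceq"
proof -
  assume h: "(G, G') \<in> sim_of C Ceq"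
  hence s: "simr Ceq G G'" and m: "G \<in> C" "G' \<in> C" by (auto simp: sim_iff)
  have l: "length G = length G'" using simr_length[OF s] .
  show ?thesis
  proof (cases "G = []")
    case True
    then show ?thesis using l c1_1[OF c1] by (simp add: sim_iff)
  next
    case False
    then obtain B b where B: "G = B @ [b]" by (metis rev_exhaust)
    with l obtain B' b' where B': "G' = B' @ [b']" by (metis length_0_conv rev_exhaust)
    from s B B' have "simr Ceq B B'" by (simp add: simr_snoc)
    then show ?thesis using l B B' m c1_2[OF c1] by (simp add: sim_iff)
  qed
qed

lemma A_e: assumes J: "(G, T, t) \<in> Ct" and F: "F \<in> C" and s: "simr Ceq (G @ [T]) F"
  shows "(butlast F, last F, t) \<in> Ct \<and> ((G, T, t), (butlast F, last F, t)) \<in> simeq_of C Ct Ceq Ceqt"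
proof -
  from simr_length[OF s] obtain B b where B: "F = B @ [b]"
    by (metis length_append_singleton Zero_not_Suc length_0_conv rev_exhaust)
  from s B have s1: "simr Ceq G B" "(G, T, b) \<in> Ceq" by (auto simp: simr_snoc)
  have "(G, b, t, t) \<in> Ceqt" using e4c[OF c1 ce s1(2) e3b[OF c1 ce J]] .
  hence "(B, b, t, t) \<in> Ceqt" using transport2[OF c1 ce simr_sym[OF c1 ce s1(1)]] by blast
  hence Bt: "(B, b, t) \<in> Ct" using e3a[OF c1 ce] by blast
  moreover have "G @ [T] \<in> C" using c1_3[OF c1 J] .
  ultimately show ?thesis using B J F s e3b[OF c1 ce J] by (simp add: simeq_iff sim_iff)
qed

lemma A_regular: "regular_congruence M C Ct (sim_of C Ceq) (simeq_of C Ct Ceq Ceqt)"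
  unfolding regular_congruence_def
proof (intro conjI allI impI)
  show "equiv C (sim_of C Ceq)" by (rule A_equiv1)
  show "equiv Ct (simeq_of C Ct Ceq Ceqt)" by (rule A_equiv2)
next
  fix G G' assume "(G, G') \<in> sim_of C Ceq"
  then show "length G = length G'" "(butlast G, butlast G') \<in> sim_of C Ceq" using A_b by auto
next
  fix J J' assume "(J, J') \<in> simeq_of C Ct Ceq Ceqt"
  then show "(bd J, bd J') \<in> sim_of C Ceq" by (auto simp: simeq_of_def bd_def)
next
  fix G T G' assume h: "G @ [T] \<in> C" "G' \<in> C" "(G, G') \<in> sim_of C Ceq"
  then have s: "simr Ceq G G'" by (simp add: sim_iff)
  have "(G', T, T) \<in> Ceq" using transport1[OF c1 ce simr_sym[OF c1 ce s] e2b[OF c1 ce h(1)]] .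
  hence "G' @ [T] \<in> C" using e2a[OF c1 ce] by blast
  moreover have "simr Ceq (G @ [T]) (G' @ [T])" using s e2b[OF c1 ce h(1)] by (simp add: simr_snoc)
  ultimately show "\<exists>T'. G' @ [T'] \<in> C \<and> (G @ [T], G' @ [T']) \<in> sim_of C Ceq"
    using h by (auto simp: sim_iff)
next
  fix J F assume h: "J \<in> Ct" "F \<in> C" "(bd J, F) \<in> sim_of C Ceq"
  obtain G T t where [simp]: "J = (G, T, t)" by (cases J) auto
  from h have s: "simr Ceq (G @ [T]) F" by (simp add: sim_iff bd_def)
  have "F \<noteq> []" using simr_length[OF s] by auto
  with A_e[of G T t F] h s show "\<exists>J'. J' \<in> Ct \<and> bd J' = F \<and> (J, J') \<in> simeq_of C Ct Ceq Ceqt"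
    by (intro exI[of _ "(butlast F, last F, t)"]) (auto simp: bd_def)
next
  fix G T D G' T' D'
  assume h: "G @ [T] \<in> C" "G @ D \<in> C" "G' @ [T'] \<in> C" "G' @ D' \<in> C"
    "(G @ [T], G' @ [T']) \<in> sim_of C Ceq" "(G @ D, G' @ D') \<in> sim_of C Ceq"
  then show "(G @ [T] @ wk_seq M (length G) D, G' @ [T'] @ wk_seq M (length G') D') \<in> sim_of C Ceq"
    using A_T[OF c1 ce] C_wk[OF c1] by (simp add: sim_iff)
next
  fix G T D R r G' T' D' R' r'
  assume h: "G @ [T] \<in> C" "(G @ D, R, r) \<in> Ct" "G' @ [T'] \<in> C" "(G' @ D', R', r') \<in> Ct"
    "(G @ [T], G' @ [T']) \<in> sim_of C Ceq" "((G @ D, R, r), G' @ D', R', r') \<in> simeq_of C Ct Ceq Ceqt"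
  from h(6) have s: "simr Ceq (G @ D @ [R]) (G' @ D' @ [R'])" and q: "(G @ D, R, r, r') \<in> Ceqt"
    by (auto simp: simeq_iff sim_iff)
  have s2: "simr Ceq (G @ [T]) (G' @ [T'])" using h(5) by (simp add: sim_iff)
  have "simr Ceq (G @ [T] @ wk_seq M (length G) (D @ [R])) (G' @ [T'] @ wk_seq M (length G') (D' @ [R']))"
    using A_T[OF c1 ce h(1) s2, of "D @ [R]" "D' @ [R']"] s by simp
  hence s3: "simr Ceq (G @ [T] @ wk_seq M (length G) D @ [wk_l M (length G) (length G + length D) R])
     (G' @ [T'] @ wk_seq M (length G') D' @ [wk_l M (length G') (length G' + length D') R'])"
    by (simp add: wk_seq_snoc)
  have ct1: "(G @ [T] @ wk_seq M (length G) D, wk_l M (length G) (length G + length D) R,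
         wk_r M (length G) (length G + length D) r) \<in> Ct" using c1_4[OF c1 h(1) h(2)] .
  have ct2: "(G' @ [T'] @ wk_seq M (length G') D', wk_l M (length G') (length G' + length D') R',
         wk_r M (length G') (length G' + length D') r') \<in> Ct" using c1_4[OF c1 h(3) h(4)] .
  have q2: "(G @ [T] @ wk_seq M (length G) D, wk_l M (length G) (length G + length D) R,
         wk_r M (length G) (length G + length D) r, wk_r M (length G) (length G + length D) r') \<in> Ceqt"
    using e5b[OF c1 ce h(1) q] .
  have l: "length G + length D = length G' + length D'" "length G = length G'"
    using simr_length[OF s] simr_length[OF s2] by simp_all
  show "((G @ [T] @ wk_seq M (length G) D, wk_l M (length G) (length G + length D) R,
          wk_r M (length G) (length G + length D) r),
         G' @ [T'] @ wk_seq M (length G') D', wk_l M (length G') (length G' + length D') R',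
          wk_r M (length G') (length G' + length D') r') \<in> simeq_of C Ct Ceq Ceqt"
    using ct1 ct2 q2 s3 c1_3[OF c1 ct1] c1_3[OF c1 ct2] l
    by (simp add: simeq_iff sim_iff)
next
  fix G S s D G' S' s' D'
  assume h: "(G, S, s) \<in> Ct" "G @ [S] @ D \<in> C" "(G', S', s') \<in> Ct" "G' @ [S'] @ D' \<in> C"
    "((G, S, s), G', S', s') \<in> simeq_of C Ct Ceq Ceqt" "(G @ [S] @ D, G' @ [S'] @ D') \<in> sim_of C Ceq"
  from h(5) have s1: "simr Ceq (G @ [S]) (G' @ [S'])" and q: "(G, S, s, s') \<in> Ceqt"
    by (auto simp: simeq_iff sim_iff)
  show "(G @ sb_seq M (length G) s D, G' @ sb_seq M (length G') s' D') \<in> sim_of C Ceq"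
    using A_S[OF c1 ce h(1) q s1] h(6) C_sb[OF c1 h(1) h(2)] C_sb[OF c1 h(3) h(4)]
    by (simp add: sim_iff)
next
  fix G S s D R r G' S' s' D' R' r'
  assume h: "(G, S, s) \<in> Ct" "(G @ [S] @ D, R, r) \<in> Ct" "(G', S', s') \<in> Ct" "(G' @ [S'] @ D', R', r') \<in> Ct"
    "((G, S, s), G', S', s') \<in> simeq_of C Ct Ceq Ceqt"
    "((G @ [S] @ D, R, r), G' @ [S'] @ D', R', r') \<in> simeq_of C Ct Ceq Ceqt"
  from h(5) have s1: "simr Ceq (G @ [S]) (G' @ [S'])" and q: "(G, S, s, s') \<in> Ceqt"
    by (auto simp: simeq_iff sim_iff)
  from h(6) have s: "simr Ceq (G @ [S] @ D @ [R]) (G' @ [S'] @ D' @ [R'])" and q1: "(G @ [S] @ D, R, r, r') \<in> Ceqt"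
    by (auto simp: simeq_iff sim_iff)
  have "simr Ceq (G @ sb_seq M (length G) s (D @ [R])) (G' @ sb_seq M (length G') s' (D' @ [R']))"
    using A_S[OF c1 ce h(1) q s1, of "D @ [R]" "D' @ [R']"] s by simp
  hence s3: "simr Ceq (G @ sb_seq M (length G) s D @ [sb_l M (length G) (Suc (length G) + length D) s R])
     (G' @ sb_seq M (length G') s' D' @ [sb_l M (length G') (Suc (length G') + length D') s' R'])"
    by (simp add: sb_seq_snoc)
  have ct1: "(G @ sb_seq M (length G) s D, sb_l M (length G) (Suc (length G) + length D) s R,
         sb_r M (length G) (Suc (length G) + length D) s r) \<in> Ct" using c1_5[OF c1 h(1) h(2)] .
  have ct2: "(G' @ sb_seq M (length G') s' D', sb_l M (length G') (Suc (length G') + length D') s' R',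
         sb_r M (length G') (Suc (length G') + length D') s' r') \<in> Ct" using c1_5[OF c1 h(3) h(4)] .
  have qa: "(G @ sb_seq M (length G) s D, sb_l M (length G) (Suc (length G) + length D) s R,
         sb_r M (length G) (Suc (length G) + length D) s r, sb_r M (length G) (Suc (length G) + length D) s r') \<in> Ceqt"
    using e6b[OF c1 ce q1 h(1)] .
  have "(G @ [S] @ D, R, r') \<in> Ct" using e3a[OF c1 ce e3c[OF c1 ce q1]] .
  from e7b[OF c1 ce this q]
  have qb: "(G @ sb_seq M (length G) s D, sb_l M (length G) (Suc (length G) + length D) s R,
         sb_r M (length G) (Suc (length G) + length D) s r', sb_r M (length G) (Suc (length G) + length D) s' r') \<in> Ceqt" .
  have l: "length G = length G'" "length D = length D'" using simr_length[OF s] simr_length[OF s1] by simp_all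
  show "((G @ sb_seq M (length G) s D, sb_l M (length G) (Suc (length G) + length D) s R,
          sb_r M (length G) (Suc (length G) + length D) s r),
         G' @ sb_seq M (length G') s' D', sb_l M (length G') (Suc (length G') + length D') s' R',
          sb_r M (length G') (Suc (length G') + length D') s' r') \<in> simeq_of C Ct Ceq Ceqt"
    using ct1 ct2 e3d[OF c1 ce qa qb] s3 c1_3[OF c1 ct1] c1_3[OF c1 ct2] l
    by (simp add: simeq_iff sim_iff)
next
  fix G T G' T'
  assume h: "G @ [T] \<in> C" "G' @ [T'] \<in> C" "(G @ [T], G' @ [T']) \<in> sim_of C Ceq"
  have s: "simr Ceq (G @ [T]) (G' @ [T'])" using h(3) by (simp add: sim_iff)
  have "simr Ceq (G @ [T] @ wk_seq M (length G) [T]) (G' @ [T'] @ wk_seq M (length G') [T'])"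
    using A_T[OF c1 ce h(1) s s] .
  hence s3: "simr Ceq (G @ [T] @ [wk_l M (length G) (length G) T]) (G' @ [T'] @ [wk_l M (length G') (length G') T'])"
    by (simp add: wk_seq_def)
  have ct1: "(G @ [T], wk_l M (length G) (length G) T, eta M (Suc (length G)) (Suc (length G))) \<in> Ct"
    using c1_6[OF c1 h(1)] .
  have ct2: "(G' @ [T'], wk_l M (length G') (length G') T', eta M (Suc (length G')) (Suc (length G'))) \<in> Ct"
    using c1_6[OF c1 h(2)] .
  have l: "length G = length G'" using simr_length[OF s] by simp
  show "((G @ [T], wk_l M (length G) (length G) T, eta M (Suc (length G)) (Suc (length G))),
         G' @ [T'], wk_l M (length G') (length G') T', eta M (Suc (length G')) (Suc (length G'))) \<in> simeq_of C Ct Ceq Ceqt"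
    using ct1 ct2 s3 c1_3[OF c1 ct1] c1_3[OF c1 ct2] e3b[OF c1 ce ct1] l
    by (simp add: simeq_iff sim_iff)
qed

lemma A_sigma: "sigma_conds C Ct (sim_of C Ceq) (simeq_of C Ct Ceq Ceqt)"
  unfolding sigma_conds_def
proof (intro conjI allI impI)
  fix G F assume h: "G \<in> C" "G \<noteq> []" "F \<in> C" "(butlast G, F) \<in> sim_of C Ceq"
  then obtain B b where B: "G = B @ [b]" by (metis rev_exhaust)
  from h B have s: "simr Ceq B F" by (simp add: sim_iff)
  have l: "length F = length B" using simr_length[OF s] by simp
  have bb: "(B, b, b) \<in> Ceq" using e2b[OF c1 ce] h(1) B by simp
  hence e: "(F, b, b) \<in> Ceq" using transport1[OF c1 ce simr_sym[OF c1 ce s]] by blast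
  have "sigma G F = F @ [b]" using B l by (simp add: sigma_def)
  then show "(G, sigma G F) \<in> sim_of C Ceq"
    using e s h(1) B bb e2a[OF c1 ce e] by (simp add: sim_iff simr_snoc)
next
  fix J F assume h: "J \<in> Ct" "F \<in> C" "(bd J, F) \<in> sim_of C Ceq"
  obtain G T t where [simp]: "J = (G, T, t)" by (cases J) auto
  from h have s: "simr Ceq (G @ [T]) F" by (simp add: sim_iff bd_def)
  have "length F = Suc (length G)" using simr_length[OF s] by simp
  hence "tsigma J F = (butlast F, last F, t)" by (simp add: tsigma_def)
  then show "(J, tsigma J F) \<in> simeq_of C Ct Ceq Ceqt" using A_e[of G T t F] h s by simp
qed

lemma A_round: "unassign C Ct (assign C Ct (Ceq, Ceqt)) = (Ceq, Ceqt)"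
proof -
  have 1: "{(G, T, T'). G @ [T] \<in> C \<and> G @ [T'] \<in> C \<and> (G @ [T], G @ [T']) \<in> sim_of C Ceq} = Ceq"
    using e2a[OF c1 ce] e2c[OF c1 ce] simr_refl[OF c1 ce] c1_2[OF c1]
    by (auto simp: sim_iff simr_snoc) (meson e2a[OF c1 ce] e2c[OF c1 ce])+
  have 2: "{(G, T, o1, o2). (G, T, o1) \<in> Ct \<and> (G, T, o2) \<in> Ct \<and> ((G, T, o1), (G, T, o2)) \<in> simeq_of C Ct Ceq Ceqt} = Ceqt"
    using e3a[OF c1 ce] e3c[OF c1 ce] simr_refl[OF c1 ce] c1_2[OF c1] c1_3[OF c1] e2b[OF c1 ce]
    by (auto simp: simeq_iff sim_iff simr_snoc) (meson e3a[OF c1 ce] e3c[OF c1 ce])+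
  show ?thesis unfolding unassign_def assign_def using 1 2 by simp
qed

end



lemma Ob_snoc: "G @ [T] \<in> Ob M \<longleftrightarrow> G \<in> Ob M \<and> T \<in> LMs M (length G)"
proof -
  have "(\<forall>j<Suc (length G). (G @ [T]) ! j \<in> LMs M j) \<longleftrightarrow>
        (\<forall>j<length G. G ! j \<in> LMs M j) \<and> T \<in> LMs M (length G)"
    by (auto simp: nth_append less_Suc_eq)
  then show ?thesis by (simp add: Ob_def)
qed

definition Ceq_u :: "'l list set \<Rightarrow> ('l list \<times> 'l list) set \<Rightarrow> ('l list \<times> 'l \<times> 'l) set" where
 "Ceq_u C sim = {(G, T, T'). G @ [T] \<in> C \<and> G @ [T'] \<in> C \<and> (G @ [T], G @ [T']) \<in> sim}"
definition Ceqt_u :: "('l list \<times> 'l \<times> 'r) set \<Rightarrow> (('l list \<times> 'l \<times> 'r) \<times> ('l list \<times> 'l \<times> 'r)) set \<Rightarrow> ('l list \<times> 'l \<times> 'r \<times> 'r) set" where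
 "Ceqt_u Ct simeq = {(G, T, o1, o2). (G, T, o1) \<in> Ct \<and> (G, T, o2) \<in> Ct \<and> ((G, T, o1), (G, T, o2)) \<in> simeq}"

context
  fixes M :: "('r, 'l) mdata" and C Ct sim simeq
  assumes c1: "conds1 M C Ct" and rc: "regular_congruence M C Ct sim simeq"
    and sc: "sigma_conds C Ct sim simeq"
begin

lemma r_a1: "equiv C sim" using rc[unfolded regular_congruence_def, THEN conjunct1] .
lemma r_a2: "equiv Ct simeq" using rc[unfolded regular_congruence_def, THEN conjunct2, THEN conjunct1] .
lemma r_b: "(G, G') \<in> sim \<Longrightarrow> length G = length G' \<and> (butlast G, butlast G') \<in> sim"
  using rc[unfolded regular_congruence_def, THEN conjunct2, THEN conjunct2, THEN conjunct1] by blast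
lemma r_c: "(J, J') \<in> simeq \<Longrightarrow> (bd J, bd J') \<in> sim"
  using rc[unfolded regular_congruence_def, THEN conjunct2, THEN conjunct2, THEN conjunct2, THEN conjunct1] by blast
lemma r_fT: "G @ [T] \<in> C \<Longrightarrow> G @ D \<in> C \<Longrightarrow> G' @ [T'] \<in> C \<Longrightarrow> G' @ D' \<in> C \<Longrightarrow>
        (G @ [T], G' @ [T']) \<in> sim \<Longrightarrow> (G @ D, G' @ D') \<in> sim \<Longrightarrow>
        (G @ [T] @ wk_seq M (length G) D, G' @ [T'] @ wk_seq M (length G') D') \<in> sim"
  using rc[unfolded regular_congruence_def, THEN conjunct2, THEN conjunct2, THEN conjunct2, THEN conjunct2,
     THEN conjunct2, THEN conjunct2, THEN conjunct1] by blast
lemma r_fTt: "G @ [T] \<in> C \<Longrightarrow> (G @ D, R, r) \<in> Ct \<Longrightarrow>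
        G' @ [T'] \<in> C \<Longrightarrow> (G' @ D', R', r') \<in> Ct \<Longrightarrow>
        (G @ [T], G' @ [T']) \<in> sim \<Longrightarrow> ((G @ D, R, r), (G' @ D', R', r')) \<in> simeq \<Longrightarrow>
        ((G @ [T] @ wk_seq M (length G) D, wk_l M (length G) (length G + length D) R,
          wk_r M (length G) (length G + length D) r),
         (G' @ [T'] @ wk_seq M (length G') D', wk_l M (length G') (length G' + length D') R',
          wk_r M (length G') (length G' + length D') r')) \<in> simeq"
  using rc[unfolded regular_congruence_def, THEN conjunct2, THEN conjunct2, THEN conjunct2, THEN conjunct2,
     THEN conjunct2, THEN conjunct2, THEN conjunct2, THEN conjunct1] by blast
lemma r_fS: "(G, S, s) \<in> Ct \<Longrightarrow> G @ [S] @ D \<in> C \<Longrightarrow>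
        (G', S', s') \<in> Ct \<Longrightarrow> G' @ [S'] @ D' \<in> C \<Longrightarrow>
        ((G, S, s), (G', S', s')) \<in> simeq \<Longrightarrow> (G @ [S] @ D, G' @ [S'] @ D') \<in> sim \<Longrightarrow>
        (G @ sb_seq M (length G) s D, G' @ sb_seq M (length G') s' D') \<in> sim"
  using rc[unfolded regular_congruence_def, THEN conjunct2, THEN conjunct2, THEN conjunct2, THEN conjunct2,
     THEN conjunct2, THEN conjunct2, THEN conjunct2, THEN conjunct2, THEN conjunct1] by blast
lemma r_fSt: "(G, S, s) \<in> Ct \<Longrightarrow> (G @ [S] @ D, R, r) \<in> Ct \<Longrightarrow>
        (G', S', s') \<in> Ct \<Longrightarrow> (G' @ [S'] @ D', R', r') \<in> Ct \<Longrightarrow>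
        ((G, S, s), (G', S', s')) \<in> simeq \<Longrightarrow> ((G @ [S] @ D, R, r), (G' @ [S'] @ D', R', r')) \<in> simeq \<Longrightarrow>
        ((G @ sb_seq M (length G) s D, sb_l M (length G) (Suc (length G) + length D) s R,
          sb_r M (length G) (Suc (length G) + length D) s r),
         (G' @ sb_seq M (length G') s' D', sb_l M (length G') (Suc (length G') + length D') s' R',
          sb_r M (length G') (Suc (length G') + length D') s' r')) \<in> simeq"
  using rc[unfolded regular_congruence_def, THEN conjunct2, THEN conjunct2, THEN conjunct2, THEN conjunct2,
     THEN conjunct2, THEN conjunct2, THEN conjunct2, THEN conjunct2, THEN conjunct2, THEN conjunct1] by blast
lemma s_ii: "G \<in> C \<Longrightarrow> G \<noteq> [] \<Longrightarrow> F \<in> C \<Longrightarrow> (butlast G, F) \<in> sim \<Longrightarrow> (G, sigma G F) \<in> sim"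
  using sc[unfolded sigma_conds_def, THEN conjunct1] by blast
lemma s_iii: "J \<in> Ct \<Longrightarrow> F \<in> C \<Longrightarrow> (bd J, F) \<in> sim \<Longrightarrow> (J, tsigma J F) \<in> simeq"
  using sc[unfolded sigma_conds_def, THEN conjunct2] by blast

lemma sub1: "(G, G') \<in> sim \<Longrightarrow> G \<in> C \<and> G' \<in> C" using r_a1 by (auto simp: equiv_def)
lemma sub2: "(J, J') \<in> simeq \<Longrightarrow> J \<in> Ct \<and> J' \<in> Ct" using r_a2 by (auto simp: equiv_def)
lemma rfl1: "G \<in> C \<Longrightarrow> (G, G) \<in> sim" using r_a1 by (auto simp: equiv_def refl_on_def)
lemma rfl2: "J \<in> Ct \<Longrightarrow> (J, J) \<in> simeq" using r_a2 by (auto simp: equiv_def refl_on_def)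
lemma sym1: "(G, G') \<in> sim \<Longrightarrow> (G', G) \<in> sim" using r_a1 by (auto simp: equiv_def sym_def)
lemma sym2: "(J, J') \<in> simeq \<Longrightarrow> (J', J) \<in> simeq" using r_a2 unfolding equiv_def by (meson symD)
lemma tr1: "(G, G') \<in> sim \<Longrightarrow> (G', G'') \<in> sim \<Longrightarrow> (G, G'') \<in> sim"
  using r_a1 by (auto simp: equiv_def trans_def)
lemma tr2: "(J, J') \<in> simeq \<Longrightarrow> (J', J'') \<in> simeq \<Longrightarrow> (J, J'') \<in> simeq"
  using r_a2 unfolding equiv_def by (meson transD)

lemma B_ext: "(A, A') \<in> sim \<Longrightarrow> A @ B \<in> C \<Longrightarrow> (A @ B, A' @ B) \<in> sim"
proof (induction B rule: rev_induct)
  case Nil then show ?case by simp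
next
  case (snoc b B)
  have l: "length A = length A'" using r_b[OF snoc.prems(1)] by simp
  have "A @ B \<in> C" using c1_2[OF c1] snoc.prems(2) by (metis append_assoc)
  hence IH: "(A @ B, A' @ B) \<in> sim" using snoc.IH snoc.prems(1) by blast
  have bl: "butlast (A @ B @ [b]) = A @ B" by (metis append_assoc butlast_snoc)
  have "(A @ B @ [b], sigma (A @ B @ [b]) (A' @ B)) \<in> sim"
    using s_ii[of "A @ B @ [b]" "A' @ B"] snoc.prems(2) IH sub1[OF IH] unfolding bl by simp
  moreover have "sigma (A @ B @ [b]) (A' @ B) = A' @ B @ [b]" using l by (simp add: sigma_def)
  ultimately show ?case by simp
qed

lemma B_swap: "(G @ [a], G' @ [b]) \<in> sim \<Longrightarrow> (G' @ [b], G @ [b]) \<in> sim"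
proof -
  assume h: "(G @ [a], G' @ [b]) \<in> sim"
  from r_b[OF h] have l: "length G = length G'" and s: "(G, G') \<in> sim" by auto
  have "(G' @ [b], sigma (G' @ [b]) G) \<in> sim"
    using s_ii[of "G' @ [b]" G] sub1[OF h] sub1[OF s] sym1[OF s] by simp
  moreover have "sigma (G' @ [b]) G = G @ [b]" using l by (simp add: sigma_def)
  ultimately show ?thesis by simp
qed


lemma B_simr: "G \<in> C \<Longrightarrow> G' \<in> C \<Longrightarrow> simr (Ceq_u C sim) G G' \<longleftrightarrow> (G, G') \<in> sim"
proof (induction G arbitrary: G' rule: rev_induct)
  case Nil
  show ?case
  proof
    assume "simr (Ceq_u C sim) [] G'" then show "([], G') \<in> sim" using rfl1 Nil by simp
  next
    assume "([], G') \<in> sim" then show "simr (Ceq_u C sim) [] G'" using r_b by fastforce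
  qed
next
  case (snoc a G)
  show ?case
  proof (cases G' rule: rev_cases)
    case Nil
    then show ?thesis using r_b by fastforce
  next
    case (snoc B b)
    have GC: "G \<in> C" "B \<in> C" using c1_2[OF c1] snoc.prems snoc by auto
    show ?thesis
    proof
      assume "simr (Ceq_u C sim) (G @ [a]) G'"
      then have s: "simr (Ceq_u C sim) G B" and e: "(G, a, b) \<in> Ceq_u C sim" using snoc by (auto simp: simr_snoc)
      from s have "(G, B) \<in> sim" using snoc.IH GC by blast
      moreover have "G @ [b] \<in> C" "(G @ [a], G @ [b]) \<in> sim" using e by (auto simp: Ceq_u_def)
      ultimately have "(G @ [b], B @ [b]) \<in> sim" using B_ext[of G B "[b]"] by simp
      then show "(G @ [a], G') \<in> sim" using tr1[OF \<open>(G @ [a], G @ [b]) \<in> sim\<close>] snoc by simp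
    next
      assume h: "(G @ [a], G') \<in> sim"
      with snoc have "(G, B) \<in> sim" using r_b by fastforce
      then have "simr (Ceq_u C sim) G B" using snoc.IH GC by blast
      moreover have "(G @ [a], G @ [b]) \<in> sim"
        using tr1[OF h[unfolded snoc] B_swap[OF h[unfolded snoc]]] .
      ultimately show "simr (Ceq_u C sim) (G @ [a]) G'" using snoc sub1 snoc.prems
        by (auto simp: simr_snoc Ceq_u_def)
    qed
  qed
qed

end



context
  fixes M :: "('r, 'l) mdata" and C Ct sim simeq
  assumes c1: "conds1 M C Ct" and rc: "regular_congruence M C Ct sim simeq"
    and sc: "sigma_conds C Ct sim simeq"
begin

lemma B_tsig: "(G', S', o2) \<in> Ct \<Longrightarrow> (G' @ [S'], G @ [S]) \<in> sim \<Longrightarrow> ((G', S', o2), (G, S, o2)) \<in> simeq"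
proof -
  assume h: "(G', S', o2) \<in> Ct" "(G' @ [S'], G @ [S]) \<in> sim"
  have "((G', S', o2), tsigma (G', S', o2) (G @ [S])) \<in> simeq"
    using s_iii[OF c1 rc sc h(1)] sub1[OF c1 rc sc h(2)] h(2) by (simp add: bd_def)
  moreover have "length G = length G'" using r_b[OF c1 rc sc h(2)] by simp
  ultimately show ?thesis by (simp add: tsigma_def)
qed

lemma B_round: "assign C Ct (unassign C Ct (sim, simeq)) = (sim, simeq)"
proof -
  have u: "unassign C Ct (sim, simeq) = (Ceq_u C sim, Ceqt_u Ct simeq)"
    by (simp add: unassign_def Ceq_u_def Ceqt_u_def)
  have 1: "sim_of C (Ceq_u C sim) = sim"
    using B_simr[OF c1 rc sc] sub1[OF c1 rc sc] by (auto simp: sim_of_def)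
  have 2: "simeq_of C Ct (Ceq_u C sim) (Ceqt_u Ct simeq) = simeq"
  proof (rule set_eqI)
    fix x :: "('l list \<times> 'l \<times> 'r) \<times> ('l list \<times> 'l \<times> 'r)"
    obtain G S o1 G' S' o2 where x: "x = ((G, S, o1), (G', S', o2))" by (cases x) auto
    define J where "J = (G, S, o1)"
    define J' where "J' = (G', S', o2)"
    note J = J_def and J' = J'_def
    have x: "x = (J, J')" using x J J' by simp
    show "x \<in> simeq_of C Ct (Ceq_u C sim) (Ceqt_u Ct simeq) \<longleftrightarrow> x \<in> simeq"
    proof
      assume "x \<in> simeq_of C Ct (Ceq_u C sim) (Ceqt_u Ct simeq)"
      then have h: "(G', S', o2) \<in> Ct" "(G @ [S], G' @ [S']) \<in> sim"
        and q: "((G, S, o1), (G, S, o2)) \<in> simeq"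
        using 1 by (auto simp: x J J' simeq_iff Ceqt_u_def)
      have "((G', S', o2), (G, S, o2)) \<in> simeq" using B_tsig h(1) sym1[OF c1 rc sc h(2)] by blast
      then show "x \<in> simeq" using tr2[OF c1 rc sc q sym2[OF c1 rc sc]] by (simp add: x J J')
    next
      assume h: "x \<in> simeq"
      then have q: "(J, J') \<in> simeq" by (simp add: x)
      have b: "(G @ [S], G' @ [S']) \<in> sim" using r_c[OF c1 rc sc q] by (simp add: J J' bd_def)
      have m: "J \<in> Ct" "J' \<in> Ct" using sub2[OF c1 rc sc q] by auto
      have t: "((G', S', o2), (G, S, o2)) \<in> simeq" using B_tsig m(2) sym1[OF c1 rc sc b] by (simp add: J')
      have q2: "((G, S, o1), (G, S, o2)) \<in> simeq" using tr2[OF c1 rc sc q[unfolded J J'] t] .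
      show "x \<in> simeq_of C Ct (Ceq_u C sim) (Ceqt_u Ct simeq)"
        using 1 m b q2 sub2[OF c1 rc sc q2] by (simp add: x J J' simeq_iff Ceqt_u_def)
    qed
  qed
  show ?thesis unfolding u assign_def using 1 2 by simp
qed

end



context
  fixes M :: "('r, 'l) mdata" and C Ct sim simeq
  assumes c1: "conds1 M C Ct" and rc: "regular_congruence M C Ct sim simeq"
    and sc: "sigma_conds C Ct sim simeq"
begin

lemmas X = sub1[OF c1 rc sc] sub2[OF c1 rc sc] rfl1[OF c1 rc sc] rfl2[OF c1 rc sc]
  sym1[OF c1 rc sc] sym2[OF c1 rc sc] tr1[OF c1 rc sc] tr2[OF c1 rc sc]

lemma B_conds: "conds_eq M C Ct (Ceq_u C sim) (Ceqt_u Ct simeq)"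
  unfolding conds_eq_def
proof (intro conjI allI impI)
  fix G T T' assume "(G, T, T') \<in> Ceq_u C sim" then show "G @ [T] \<in> C" by (simp add: Ceq_u_def)
next
  fix G T assume "G @ [T] \<in> C" then show "(G, T, T) \<in> Ceq_u C sim" using X(3) by (simp add: Ceq_u_def)
next
  fix G T T' assume "(G, T, T') \<in> Ceq_u C sim" then show "(G, T', T) \<in> Ceq_u C sim"
    using X(5) by (simp add: Ceq_u_def)
next
  fix G T T' T'' assume "(G, T, T') \<in> Ceq_u C sim" "(G, T', T'') \<in> Ceq_u C sim"
  then show "(G, T, T'') \<in> Ceq_u C sim" using X(7) by (auto simp: Ceq_u_def)
next
  fix G T o1 o2 assume "(G, T, o1, o2) \<in> Ceqt_u Ct simeq" then show "(G, T, o1) \<in> Ct"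
    by (simp add: Ceqt_u_def)
next
  fix G T o1 assume "(G, T, o1) \<in> Ct" then show "(G, T, o1, o1) \<in> Ceqt_u Ct simeq"
    using X(4) by (simp add: Ceqt_u_def)
next
  fix G T o1 o2 assume "(G, T, o1, o2) \<in> Ceqt_u Ct simeq" then show "(G, T, o2, o1) \<in> Ceqt_u Ct simeq"
    using X(6) by (simp add: Ceqt_u_def)
next
  fix G T o1 o2 o3 assume "(G, T, o1, o2) \<in> Ceqt_u Ct simeq" "(G, T, o2, o3) \<in> Ceqt_u Ct simeq"
  then show "(G, T, o1, o3) \<in> Ceqt_u Ct simeq" using X(8) by (auto simp: Ceqt_u_def)
next
  fix G1 T T' G2 S S' assume h: "(G1, T, T') \<in> Ceq_u C sim" "(G1 @ [T] @ G2, S, S') \<in> Ceq_u C sim"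
  from h(1) have t: "(G1 @ [T], G1 @ [T']) \<in> sim" by (simp add: Ceq_u_def)
  from h(2) have m: "G1 @ [T] @ G2 @ [S] \<in> C" "G1 @ [T] @ G2 @ [S'] \<in> C"
    and s: "(G1 @ [T] @ G2 @ [S], G1 @ [T] @ G2 @ [S']) \<in> sim" by (auto simp: Ceq_u_def)
  have a1: "(G1 @ [T] @ G2 @ [S], G1 @ [T'] @ G2 @ [S]) \<in> sim"
    using B_ext[OF c1 rc sc t, of "G2 @ [S]"] m(1) by simp
  have a2: "(G1 @ [T] @ G2 @ [S'], G1 @ [T'] @ G2 @ [S']) \<in> sim"
    using B_ext[OF c1 rc sc t, of "G2 @ [S']"] m(2) by simp
  have "(G1 @ [T'] @ G2 @ [S], G1 @ [T'] @ G2 @ [S']) \<in> sim"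
    using X(7)[OF X(7)[OF X(5)[OF a1] s] a2] .
  then show "(G1 @ [T'] @ G2, S, S') \<in> Ceq_u C sim" using X(1) by (auto simp: Ceq_u_def)
next
  fix G1 T T' G2 S o1 o2 assume h: "(G1, T, T') \<in> Ceq_u C sim" "(G1 @ [T] @ G2, S, o1, o2) \<in> Ceqt_u Ct simeq"
  from h(1) have t: "(G1 @ [T], G1 @ [T']) \<in> sim" by (simp add: Ceq_u_def)
  from h(2) have m: "(G1 @ [T] @ G2, S, o1) \<in> Ct" "(G1 @ [T] @ G2, S, o2) \<in> Ct"
    and q: "((G1 @ [T] @ G2, S, o1), (G1 @ [T] @ G2, S, o2)) \<in> simeq" by (auto simp: Ceqt_u_def)
  have mC: "G1 @ [T] @ G2 @ [S] \<in> C" using c1_3[OF c1 m(1)] by simp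
  have a: "(G1 @ [T] @ G2 @ [S], G1 @ [T'] @ G2 @ [S]) \<in> sim"
    using B_ext[OF c1 rc sc t, of "G2 @ [S]"] mC by simp
  have b1: "((G1 @ [T] @ G2, S, o1), (G1 @ [T'] @ G2, S, o1)) \<in> simeq"
    using B_tsig[OF c1 rc sc m(1)] a by simp
  have b2: "((G1 @ [T] @ G2, S, o2), (G1 @ [T'] @ G2, S, o2)) \<in> simeq"
    using B_tsig[OF c1 rc sc m(2)] a by simp
  have "((G1 @ [T'] @ G2, S, o1), (G1 @ [T'] @ G2, S, o2)) \<in> simeq"
    using X(8)[OF X(8)[OF X(6)[OF b1] q] b2] .
  then show "(G1 @ [T'] @ G2, S, o1, o2) \<in> Ceqt_u Ct simeq" using X(2) by (auto simp: Ceqt_u_def)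
next
  fix G S S' o1 o2 assume h: "(G, S, S') \<in> Ceq_u C sim" "(G, S, o1, o2) \<in> Ceqt_u Ct simeq"
  from h(1) have t: "(G @ [S], G @ [S']) \<in> sim" by (simp add: Ceq_u_def)
  from h(2) have m: "(G, S, o1) \<in> Ct" "(G, S, o2) \<in> Ct"
    and q: "((G, S, o1), (G, S, o2)) \<in> simeq" by (auto simp: Ceqt_u_def)
  have b1: "((G, S, o1), (G, S', o1)) \<in> simeq" using B_tsig[OF c1 rc sc m(1) t] .
  have b2: "((G, S, o2), (G, S', o2)) \<in> simeq" using B_tsig[OF c1 rc sc m(2) t] .
  have "((G, S', o1), (G, S', o2)) \<in> simeq"
    using X(8)[OF X(8)[OF X(6)[OF b1] q] b2] .
  then show "(G, S', o1, o2) \<in> Ceqt_u Ct simeq" using X(2) by (auto simp: Ceqt_u_def)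
next
  fix G1 T G2 S S' assume h: "G1 @ [T] \<in> C" "(G1 @ G2, S, S') \<in> Ceq_u C sim"
  from h(2) have m: "G1 @ G2 @ [S] \<in> C" "G1 @ G2 @ [S'] \<in> C"
    and s: "(G1 @ G2 @ [S], G1 @ G2 @ [S']) \<in> sim" by (auto simp: Ceq_u_def)
  have "(G1 @ [T] @ wk_seq M (length G1) (G2 @ [S]), G1 @ [T] @ wk_seq M (length G1) (G2 @ [S'])) \<in> sim"
    using r_fT[OF c1 rc sc h(1), of "G2 @ [S]" G1 T "G2 @ [S']"] m s h(1) X(3)[OF h(1)] by simp
  then show "(G1 @ [T] @ wk_seq M (length G1) G2, wk_l M (length G1) (length G1 + length G2) S,
         wk_l M (length G1) (length G1 + length G2) S') \<in> Ceq_u C sim"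
    using X(1) by (auto simp: Ceq_u_def wk_seq_snoc)
next
  fix G1 T G2 S o1 o2 assume h: "G1 @ [T] \<in> C" "(G1 @ G2, S, o1, o2) \<in> Ceqt_u Ct simeq"
  from h(2) have m: "(G1 @ G2, S, o1) \<in> Ct" "(G1 @ G2, S, o2) \<in> Ct"
    and q: "((G1 @ G2, S, o1), (G1 @ G2, S, o2)) \<in> simeq" by (auto simp: Ceqt_u_def)
  have "((G1 @ [T] @ wk_seq M (length G1) G2, wk_l M (length G1) (length G1 + length G2) S,
          wk_r M (length G1) (length G1 + length G2) o1),
         (G1 @ [T] @ wk_seq M (length G1) G2, wk_l M (length G1) (length G1 + length G2) S,
          wk_r M (length G1) (length G1 + length G2) o2)) \<in> simeq"
    using r_fTt[OF c1 rc sc h(1) m(1) h(1) m(2) X(3)[OF h(1)] q] .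
  then show "(G1 @ [T] @ wk_seq M (length G1) G2,
         wk_l M (length G1) (length G1 + length G2) S,
         wk_r M (length G1) (length G1 + length G2) o1,
         wk_r M (length G1) (length G1 + length G2) o2) \<in> Ceqt_u Ct simeq"
    using X(2) by (auto simp: Ceqt_u_def)
next
  fix G1 T G2 S S' r assume h: "(G1 @ [T] @ G2, S, S') \<in> Ceq_u C sim" "(G1, T, r) \<in> Ct"
  from h(1) have m: "G1 @ [T] @ G2 @ [S] \<in> C" "G1 @ [T] @ G2 @ [S'] \<in> C"
    and s: "(G1 @ [T] @ G2 @ [S], G1 @ [T] @ G2 @ [S']) \<in> sim" by (auto simp: Ceq_u_def)
  have "(G1 @ sb_seq M (length G1) r (G2 @ [S]), G1 @ sb_seq M (length G1) r (G2 @ [S'])) \<in> sim"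
    using r_fS[OF c1 rc sc h(2), of "G2 @ [S]" G1 T r "G2 @ [S']"] m s h(2) X(4)[OF h(2)] by simp
  then show "(G1 @ sb_seq M (length G1) r G2,
         sb_l M (length G1) (Suc (length G1) + length G2) r S,
         sb_l M (length G1) (Suc (length G1) + length G2) r S') \<in> Ceq_u C sim"
    using X(1) by (auto simp: Ceq_u_def sb_seq_snoc)
next
  fix G1 T G2 S o1 o2 r assume h: "(G1 @ [T] @ G2, S, o1, o2) \<in> Ceqt_u Ct simeq" "(G1, T, r) \<in> Ct"
  from h(1) have m: "(G1 @ [T] @ G2, S, o1) \<in> Ct" "(G1 @ [T] @ G2, S, o2) \<in> Ct"
    and q: "((G1 @ [T] @ G2, S, o1), (G1 @ [T] @ G2, S, o2)) \<in> simeq" by (auto simp: Ceqt_u_def)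
  have "((G1 @ sb_seq M (length G1) r G2, sb_l M (length G1) (Suc (length G1) + length G2) r S,
          sb_r M (length G1) (Suc (length G1) + length G2) r o1),
         (G1 @ sb_seq M (length G1) r G2, sb_l M (length G1) (Suc (length G1) + length G2) r S,
          sb_r M (length G1) (Suc (length G1) + length G2) r o2)) \<in> simeq"
    using r_fSt[OF c1 rc sc h(2) m(1) h(2) m(2) X(4)[OF h(2)] q] .
  then show "(G1 @ sb_seq M (length G1) r G2,
         sb_l M (length G1) (Suc (length G1) + length G2) r S,
         sb_r M (length G1) (Suc (length G1) + length G2) r o1,
         sb_r M (length G1) (Suc (length G1) + length G2) r o2) \<in> Ceqt_u Ct simeq"
    using X(2) by (auto simp: Ceqt_u_def)
next
  fix G1 T G2 S r r' assume h: "G1 @ [T] @ G2 @ [S] \<in> C" "(G1, T, r, r') \<in> Ceqt_u Ct simeq"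
  from h(2) have m: "(G1, T, r) \<in> Ct" "(G1, T, r') \<in> Ct"
    and q: "((G1, T, r), (G1, T, r')) \<in> simeq" by (auto simp: Ceqt_u_def)
  have "(G1 @ sb_seq M (length G1) r (G2 @ [S]), G1 @ sb_seq M (length G1) r' (G2 @ [S])) \<in> sim"
    using r_fS[OF c1 rc sc m(1), of "G2 @ [S]" G1 T r' "G2 @ [S]"] m h(1) q X(3)[OF h(1)] by simp
  hence a: "((G1 @ sb_seq M (length G1) r G2) @ [sb_l M (length G1) (Suc (length G1) + length G2) r S],
     (G1 @ sb_seq M (length G1) r' G2) @ [sb_l M (length G1) (Suc (length G1) + length G2) r' S]) \<in> sim"
    by (simp add: sb_seq_snoc)
  have "((G1 @ sb_seq M (length G1) r G2) @ [sb_l M (length G1) (Suc (length G1) + length G2) r S],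
     (G1 @ sb_seq M (length G1) r G2) @ [sb_l M (length G1) (Suc (length G1) + length G2) r' S]) \<in> sim"
    using X(7)[OF a B_swap[OF c1 rc sc a]] .
  then show "(G1 @ sb_seq M (length G1) r G2,
         sb_l M (length G1) (Suc (length G1) + length G2) r S,
         sb_l M (length G1) (Suc (length G1) + length G2) r' S) \<in> Ceq_u C sim"
    using X(1) by (auto simp: Ceq_u_def)
next
  fix G1 T G2 S o1 r r' assume h: "(G1 @ [T] @ G2, S, o1) \<in> Ct" "(G1, T, r, r') \<in> Ceqt_u Ct simeq"
  from h(2) have m: "(G1, T, r) \<in> Ct" "(G1, T, r') \<in> Ct"
    and q: "((G1, T, r), (G1, T, r')) \<in> simeq" by (auto simp: Ceqt_u_def)
  have "((G1 @ sb_seq M (length G1) r G2, sb_l M (length G1) (Suc (length G1) + length G2) r S,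
          sb_r M (length G1) (Suc (length G1) + length G2) r o1),
         (G1 @ sb_seq M (length G1) r' G2, sb_l M (length G1) (Suc (length G1) + length G2) r' S,
          sb_r M (length G1) (Suc (length G1) + length G2) r' o1)) \<in> simeq"
    using r_fSt[OF c1 rc sc m(1) h(1) m(2) h(1) q X(4)[OF h(1)]] by simp
  note q1 = this
  have bdd: "((G1 @ sb_seq M (length G1) r' G2) @ [sb_l M (length G1) (Suc (length G1) + length G2) r' S],
     (G1 @ sb_seq M (length G1) r G2) @ [sb_l M (length G1) (Suc (length G1) + length G2) r S]) \<in> sim"
    using X(5)[OF r_c[OF c1 rc sc q1]] by (simp add: bd_def)
  have ct: "(G1 @ sb_seq M (length G1) r' G2, sb_l M (length G1) (Suc (length G1) + length G2) r' S,
          sb_r M (length G1) (Suc (length G1) + length G2) r' o1) \<in> Ct" using X(2)[OF q1] by simp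
  have q2: "((G1 @ sb_seq M (length G1) r G2, sb_l M (length G1) (Suc (length G1) + length G2) r S,
          sb_r M (length G1) (Suc (length G1) + length G2) r o1),
         (G1 @ sb_seq M (length G1) r G2, sb_l M (length G1) (Suc (length G1) + length G2) r S,
          sb_r M (length G1) (Suc (length G1) + length G2) r' o1)) \<in> simeq"
    using X(8)[OF q1 B_tsig[OF c1 rc sc ct bdd]] .
  then show "(G1 @ sb_seq M (length G1) r G2,
         sb_l M (length G1) (Suc (length G1) + length G2) r S,
         sb_r M (length G1) (Suc (length G1) + length G2) r o1,
         sb_r M (length G1) (Suc (length G1) + length G2) r' o1) \<in> Ceqt_u Ct simeq"
    using X(2)[OF q2] q2 by (auto simp: Ceqt_u_def)
qed

end



lemma B_amb: "C \<subseteq> Ob M \<Longrightarrow> Ct \<subseteq> ObT M \<Longrightarrow>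
  Ceq_u C sim \<subseteq> EqAmb M \<and> Ceqt_u Ct simeq \<subseteq> EqtAmb M"
proof -
  assume a: "C \<subseteq> Ob M" "Ct \<subseteq> ObT M"
  have 1: "Ceq_u C sim \<subseteq> EqAmb M"
  proof
    fix x assume x: "x \<in> Ceq_u C sim"
    obtain G T T' where xx: "x = (G, T, T')" by (cases x) auto
    from x xx a(1) have "G @ [T] \<in> Ob M" "G @ [T'] \<in> Ob M" by (auto simp: Ceq_u_def)
    then show "x \<in> EqAmb M" using xx by (simp add: EqAmb_def Ob_snoc)
  qed
  have 2: "Ceqt_u Ct simeq \<subseteq> EqtAmb M"
  proof
    fix x assume x: "x \<in> Ceqt_u Ct simeq"
    obtain G T o1 o2 where xx: "x = (G, T, o1, o2)" by (cases x) auto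
    from x xx a(2) have "(G, T, o1) \<in> ObT M" "(G, T, o2) \<in> ObT M" by (auto simp: Ceqt_u_def)
    then show "x \<in> EqtAmb M" using xx by (simp add: EqtAmb_def ObT_def Ob_snoc)
  qed
  from 1 2 show ?thesis ..
qed

theorem proposition6p11:
  fixes M :: "('r, 'l) mdata"
    and C :: "'l list set"
    and Ct :: "('l list \<times> 'l \<times> 'r) set"
  assumes "monad_module M"
    and "C \<subseteq> Ob M"
    and "Ct \<subseteq> ObT M"
    and "conds1 M C Ct"
  defines "Dom \<equiv> {(Ceq, Ceqt). Ceq \<subseteq> EqAmb M \<and> Ceqt \<subseteq> EqtAmb M \<and> conds_eq M C Ct Ceq Ceqt}"
    and "Cod \<equiv> {(sim, simeq). regular_congruence M C Ct sim simeq \<and> sigma_conds C Ct sim simeq}"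
  shows "bij_betw (assign C Ct) Dom Cod
    \<and> (\<forall>p\<in>Dom. unassign C Ct (assign C Ct p) = p)
    \<and> (\<forall>q\<in>Cod. unassign C Ct q \<in> Dom \<and> assign C Ct (unassign C Ct q) = q)"
proof -
  have L1: "\<forall>p\<in>Dom. unassign C Ct (assign C Ct p) = p"
  proof
    fix p assume "p \<in> Dom"
    then obtain Ceq Ceqt where p: "p = (Ceq, Ceqt)" and ce: "conds_eq M C Ct Ceq Ceqt"
      by (auto simp: Dom_def)
    show "unassign C Ct (assign C Ct p) = p" using A_round[OF assms(4) ce] p by simp
  qed
  have L2: "\<forall>p\<in>Dom. assign C Ct p \<in> Cod"
  proof
    fix p assume "p \<in> Dom"
    then obtain Ceq Ceqt where p: "p = (Ceq, Ceqt)" and ce: "conds_eq M C Ct Ceq Ceqt"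
      by (auto simp: Dom_def)
    show "assign C Ct p \<in> Cod"
      using A_regular[OF assms(4) ce] A_sigma[OF assms(4) ce] p by (simp add: Cod_def assign_def)
  qed
  have R: "\<forall>q\<in>Cod. unassign C Ct q \<in> Dom \<and> assign C Ct (unassign C Ct q) = q"
  proof
    fix q assume "q \<in> Cod"
    then obtain sim simeq where q: "q = (sim, simeq)" and rc: "regular_congruence M C Ct sim simeq"
      and sc: "sigma_conds C Ct sim simeq" by (auto simp: Cod_def)
    have u: "unassign C Ct (sim, simeq) = (Ceq_u C sim, Ceqt_u Ct simeq)"
      by (simp add: unassign_def Ceq_u_def Ceqt_u_def)
    show "unassign C Ct q \<in> Dom \<and> assign C Ct (unassign C Ct q) = q"
      using B_amb[OF assms(2,3), of sim simeq] B_conds[OF assms(4) rc sc] B_round[OF assms(4) rc sc] q u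
      by (simp add: Dom_def)
  qed
  have "bij_betw (assign C Ct) Dom Cod"
    by (rule bij_betw_byWitness[where f' = "unassign C Ct"]) (use L1 L2 R in auto)
  with L1 R show ?thesis by blast
qed



end
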